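(* Let $n\ge3$, $0\le\alpha\le1$ and $m:=\lfloor n^\alpha\rfloor$. Then \[ \mathbf E\bigl(\hat L_n^{\alpha,1}\bigr)=2\,\frac{n-m}{n-1} \] and \[ \mathbf{Var}\bigl(\hat L_n^{\alpha,1}\bigr)=\frac{8(h_{n-1}-h_{m-1})(n+2m-2)}{(n-1)(n-2)}-\frac{4(n-m)(4n+m-5)}{(n-1)^2(n-2)}. \] In particular (case $\alpha=0$), $\mathbf E(L_n)=2$ and $\mathbf{Var}(L_n)=\frac{8nh_n-16n+8}{(n-1)(n-2)}$.
   Context: Kingman's $n$-coalescent ($n\ge 2$) consists of coalescent times $T_1>T_2>\cdots>T_n=0$ such that $\binom{k}{2}(T_{k-1}-T_k)$, $k=2,\dots,n$, are independent exponential random variables with mean $1$, together with an independent sequence of partitions $\pi_1=\{\{1,\dots,n\}\},\pi_2,\dots,\pi_n=\{\{1\},\dots,\{n\}\}$ of $\{1,\dots,n\}$, where $\pi_k$ has $k$ blocks and $\pi_{k-1}$ is obtained from $\pi_k$ by merging two blocks of $\pi_k$ chosen uniformly at random (independently of the past). For a leaf $i$ let $\rho(i):=\max\{k\ge1:\{i\}\notin\pi_k\}$, and $L_n:=\sum_{i=1}^nT_{\rho(i)}$. For $0\le\alpha<\beta\le1$ define $\hat L_n^{\alpha,\beta}:=\sum_{i=1}^n\bigl(T_{\rho(i)}\wedge T_{\lfloor n^\alpha\rfloor}-T_{\rho(i)}\wedge T_{\lfloor n^\beta\rfloor}\bigr)$ (the portion of the external length between levels $\lfloor n^\alpha\rfloor$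 and $\lfloor n^\beta\rfloor$); note $\hat L_n^{0,1}=L_n$. Here $h_j:=1+\frac12+\cdots+\frac1j$ is the $j$-th harmonic number, with $h_0:=0$. *)

theory Defs
  imports "HOL-Probability.Probability"
begin

definition Exp1 :: "real measure" where
  "Exp1 = density lborel (\<lambda>x. ennreal (exponential_density 1 x))"

definition merge_step :: "nat set set \<Rightarrow> nat set set pmf" where
  "merge_step P = map_pmf (\<lambda>D. (P - D) \<union> {\<Union>D}) (pmf_of_set {D. D \<subseteq> P \<and> card D = 2})"

fun chain_from :: "nat \<Rightarrow> nat set set \<Rightarrow> nat set set list pmf" where
  "chain_from 0 P = return_pmf [P]"
| "chain_from (Suc j) P = bind_pmf (merge_step P) (\<lambda>Q. map_pmf (Cons P) (chain_from j Q))"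

definition singletons :: "nat \<Rightarrow> nat set set" where
  "singletons n = {{i} | i. i \<in> {1..n}}"

text \<open>Sample space: (W, Ps) where W k (k = 2..n) are the iid Exp(1) variables
  binom(k,2)(T_{k-1} - T_k), and Ps = [pi_n, pi_{n-1}, ..., pi_1] is the
  partition chain, independent of W.\<close>
definition coalescent :: "nat \<Rightarrow> ((nat \<Rightarrow> real) \<times> nat set set list) measure" where
  "coalescent n = (PiM {2..n} (\<lambda>_. Exp1)) \<Otimes>\<^sub>M measure_pmf (chain_from (n - 1) (singletons n))"

definition coal_T :: "nat \<Rightarrow> (nat \<Rightarrow> real) \<Rightarrow> nat \<Rightarrow> real" where
  "coal_T n W k = (\<Sum>j\<in>{k+1..n}. W j / real (j choose 2))"

definition coal_pi :: "nat \<Rightarrow> nat set set list \<Rightarrow> nat \<Rightarrow> nat set set" where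
  "coal_pi n Ps k = Ps ! (n - k)"

text \<open>rho(i) = max{k >= 1 : {i} not in pi_k}  (k ranges over 1..n, as pi_k is only
  defined there).\<close>
definition coal_rho :: "nat \<Rightarrow> nat set set list \<Rightarrow> nat \<Rightarrow> nat" where
  "coal_rho n Ps i = Max {k \<in> {1..n}. {i} \<notin> coal_pi n Ps k}"

definition ext_length :: "nat \<Rightarrow> (nat \<Rightarrow> real) \<times> nat set set list \<Rightarrow> real" where
  "ext_length n \<omega> = (\<Sum>i\<in>{1..n}. coal_T n (fst \<omega>) (coal_rho n (snd \<omega>) i))"

definition ext_length_part :: "nat \<Rightarrow> real \<Rightarrow> real \<Rightarrow> (nat \<Rightarrow> real) \<times> nat set set list \<Rightarrow> real" where
  "ext_length_part n \<alpha> \<beta> \<omega> =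
    (let T = coal_T n (fst \<omega>); \<rho> = coal_rho n (snd \<omega>);
         a = nat \<lfloor>real n powr \<alpha>\<rfloor>; b = nat \<lfloor>real n powr \<beta>\<rfloor>
     in (\<Sum>i\<in>{1..n}. min (T (\<rho> i)) (T a) - min (T (\<rho> i)) (T b)))"

end

theory Submission
  imports Defs
begin


definition sg :: "nat set set \<Rightarrow> nat" where "sg P = card {i. {i} \<in> P}"

definition good :: "nat set \<Rightarrow> nat set set \<Rightarrow> bool" where
  "good U P \<longleftrightarrow> finite P \<and> {} \<notin> P \<and> \<Union>P = U \<and> (\<forall>A\<in>P. \<forall>B\<in>P. A \<noteq> B \<longrightarrow> A \<inter> B = {})"

definition mg :: "nat set set \<Rightarrow> nat set set \<Rightarrow> nat set set" where
  "mg P D = (P - D) \<union> {\<Union>D}"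

definition ind :: "nat set \<Rightarrow> real" where "ind A = (if \<exists>i. A = {i} then 1 else 0)"

lemma finite_sgset: "finite P \<Longrightarrow> finite {i. {i} \<in> P}"
proof -
  assume "finite P"
  have "{i. {i} \<in> P} = (\<lambda>i. {i}) -` P" by auto
  then show ?thesis using finite_vimageI[OF \<open>finite P\<close>, of "\<lambda>i. {i}"] by (auto simp: inj_on_def)
qed

lemma sg_sum: "finite P \<Longrightarrow> real (sg P) = (\<Sum>A\<in>P. ind A)"
proof -
  assume f: "finite P"
  have "(\<Sum>A\<in>P. ind A) = (\<Sum>A\<in>{A\<in>P. \<exists>i. A = {i}}. 1)"
    using f by (simp add: ind_def sum.If_cases Int_def conj_commute)
  also have "{A\<in>P. \<exists>i. A = {i}} = (\<lambda>i. {i}) ` {i. {i} \<in> P}" by auto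
  also have "(\<Sum>A\<in>(\<lambda>i. {i}) ` {i. {i} \<in> P}. (1::real)) = real (card {i. {i} \<in> P})"
    by (subst sum.reindex) (auto simp: inj_on_def)
  finally show ?thesis by (simp add: sg_def)
qed

lemma mg_two:
  assumes g: "good U P" and AB: "A \<in> P" "B \<in> P" "A \<noteq> B"
  shows "good U (mg P {A,B})" "card (mg P {A,B}) = card P - 1"
    "\<And>i. {i} \<in> mg P {A,B} \<longleftrightarrow> {i} \<in> P \<and> {i} \<noteq> A \<and> {i} \<noteq> B"
proof -
  have fP: "finite P" and ne: "{} \<notin> P" and U: "\<Union>P = U"
    and dj: "\<And>X Y. X\<in>P \<Longrightarrow> Y\<in>P \<Longrightarrow> X \<noteq> Y \<Longrightarrow> X \<inter> Y = {}"
    using g by (auto simp: good_def)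
  have Ane: "A \<noteq> {}" "B \<noteq> {}" using ne AB by auto
  have notin: "A \<union> B \<notin> P - {A,B}"
  proof
    assume "A \<union> B \<in> P - {A,B}"
    then have "A \<union> B \<in> P" "A \<union> B \<noteq> A" by auto
    with dj[OF this(1) AB(1) this(2)] Ane show False by auto
  qed
  have m: "mg P {A,B} = (P - {A,B}) \<union> {A \<union> B}" by (simp add: mg_def)
  show "good U (mg P {A,B})"
    unfolding good_def m
  proof (intro conjI ballI impI)
    show "finite (P - {A, B} \<union> {A \<union> B})" using fP by auto
    show "{} \<notin> P - {A, B} \<union> {A \<union> B}" using ne Ane by auto
    show "\<Union> (P - {A, B} \<union> {A \<union> B}) = U" using U AB by auto
  next
    fix X Y assume X: "X \<in> P - {A, B} \<union> {A \<union> B}" and Y: "Y \<in> P - {A, B} \<union> {A \<union> B}" and XY: "X \<noteq> Y"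
    show "X \<inter> Y = {}"
      using X Y XY dj AB by (auto; metis Int_iff empty_iff insertCI)+
  qed
  have c2: "card {A,B} = 2" using AB by auto
  have "card P \<ge> 2" using card_mono[OF fP, of "{A,B}"] AB c2 by auto
  show "card (mg P {A,B}) = card P - 1"
    unfolding m using notin fP AB \<open>card P \<ge> 2\<close> c2
    by (subst card_Un_disjoint) (auto simp: card_Diff_subset)
  fix i
  show "{i} \<in> mg P {A,B} \<longleftrightarrow> {i} \<in> P \<and> {i} \<noteq> A \<and> {i} \<noteq> B"
  proof
    assume "{i} \<in> mg P {A,B}"
    then consider "{i} \<in> P - {A,B}" | "{i} = A \<union> B" unfolding m by auto
    then show "{i} \<in> P \<and> {i} \<noteq> A \<and> {i} \<noteq> B"
    proof cases
      case 2
      then have "A = {i}" "B = {i}" using Ane by (metis Un_upper1 Un_upper2 subset_singleton_iff)+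
      with AB show ?thesis by auto
    qed auto
  qed (auto simp: m)
qed

lemma sg_mg:
  assumes g: "good U P" and AB: "A \<in> P" "B \<in> P" "A \<noteq> B"
  shows "real (sg (mg P {A,B})) = real (sg P) - ind A - ind B"
proof -
  have fP: "finite P" using g by (simp add: good_def)
  have "{i. {i} \<in> mg P {A,B}} = {i. {i} \<in> P} - {i. {i} = A} - {i. {i} = B}"
    using mg_two(3)[OF assms] by auto
  then have "sg (mg P {A,B}) = card ({i. {i} \<in> P} - {i. {i} = A} - {i. {i} = B})"
    by (simp add: sg_def)
  moreover have "real (card ({i. {i} \<in> P} - {i. {i} = A} - {i. {i} = B})) = real (sg P) - ind A - ind B"
  proof -
    have fin: "finite {i. {i} \<in> P}" using finite_sgset[OF fP] .
    let ?S = "{i. {i} \<in> P}"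
    have eqs: "{i. {i} = X} = (if \<exists>i. X = {i} then {THE i. X = {i}} else {})" for X :: "nat set"
      by auto
    have sub: "{i. {i} = A} \<subseteq> ?S" "{i. {i} = B} \<subseteq> ?S" using AB by auto
    have dis: "{i. {i} = A} \<inter> {i. {i} = B} = {}" using AB by auto
    have "?S - {i. {i} = A} - {i. {i} = B} = ?S - ({i. {i} = A} \<union> {i. {i} = B})" by auto
    then have "card (?S - {i. {i} = A} - {i. {i} = B}) = card ?S - card ({i. {i} = A} \<union> {i. {i} = B})"
    proof -
      have "finite ({i. {i} = A} \<union> {i. {i} = B})" using finite_subset[OF _ fin] sub by blast
      moreover have "{i. {i} = A} \<union> {i. {i} = B} \<subseteq> ?S" using sub by blast
      ultimately have "card (?S - ({i. {i} = A} \<union> {i. {i} = B})) = card ?S - card ({i. {i} = A} \<union> {i. {i} = B})"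
        by (rule card_Diff_subset)
      then show ?thesis using \<open>?S - {i. {i} = A} - {i. {i} = B} = ?S - ({i. {i} = A} \<union> {i. {i} = B})\<close> by simp
    qed
    moreover have "card ({i. {i} = A} \<union> {i. {i} = B}) = card {i. {i} = A} + card {i. {i} = B}"
      using dis by (subst card_Un_disjoint) (auto simp: eqs)
    moreover have "card {i. {i} = A} + card {i. {i} = B} \<le> card ?S"
      using card_mono[OF fin, of "{i. {i} = A} \<union> {i. {i} = B}"] sub \<open>card ({i. {i} = A} \<union> {i. {i} = B}) = _\<close> by auto
    moreover have "real (card {i. {i} = X}) = ind X" for X :: "nat set"
      by (subst eqs) (auto simp: ind_def)
    ultimately show ?thesis by (simp add: sg_def of_nat_diff)
  qed
  ultimately show ?thesis by simp
qed

definition Off :: "nat set set \<Rightarrow> (nat set \<times> nat set) set" where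
  "Off P = Sigma P (\<lambda>A. P - {A})"
definition Dset :: "nat set set \<Rightarrow> nat set set set" where
  "Dset P = {D. D \<subseteq> P \<and> card D = 2}"

lemma finite_Off: "finite P \<Longrightarrow> finite (Off P)" by (simp add: Off_def)
lemma card_Off: "finite P \<Longrightarrow> card (Off P) = card P * (card P - 1)"
  by (simp add: Off_def card_SigmaI card_Diff_subset sum_constant)
  
lemma pairs_sum:
  fixes h :: "nat set set \<Rightarrow> real"
  assumes f: "finite P"
  shows "(\<Sum>x\<in>Off P. h {fst x, snd x}) = 2 * (\<Sum>D\<in>Dset P. h D)"
proof -
  let ?g = "\<lambda>x::nat set \<times> nat set. {fst x, snd x}"
  have img: "?g ` Off P = Dset P"
  proof
    show "?g ` Off P \<subseteq> Dset P" using card_2_iff by (fastforce simp: Off_def Dset_def)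
    show "Dset P \<subseteq> ?g ` Off P"
    proof
      fix D assume "D \<in> Dset P"
      then have "D \<subseteq> P" "card D = 2" by (auto simp: Dset_def)
      then obtain A B where "D = {A,B}" "A \<noteq> B" by (meson card_2_iff)
      with \<open>D \<subseteq> P\<close> have "(A,B) \<in> Off P" "D = ?g (A,B)" by (auto simp: Off_def)
      then show "D \<in> ?g ` Off P" by blast
    qed
  qed
  have fib: "card {x \<in> Off P. ?g x = D} = 2" if "D \<in> Dset P" for D
  proof -
    from that have "D \<subseteq> P" "card D = 2" by (auto simp: Dset_def)
    then obtain A B where D0: "D = {A,B}" "A \<noteq> B" by (meson card_2_iff)
    with \<open>D \<subseteq> P\<close> have D: "D = {A,B}" "A \<noteq> B" "A \<in> P" "B \<in> P" by auto
    have "{x \<in> Off P. ?g x = D} = {(A,B),(B,A)}"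
      using D by (auto simp: Off_def doubleton_eq_iff)
    then show ?thesis using D by simp
  qed
  have "(\<Sum>x\<in>Off P. h (?g x)) = (\<Sum>D\<in>?g ` Off P. \<Sum>x\<in>{x \<in> Off P. ?g x = D}. h (?g x))"
    by (rule sum.image_gen[OF finite_Off[OF f]])
  also have "\<dots> = (\<Sum>D\<in>Dset P. 2 * h D)"
    unfolding img by (rule sum.cong) (auto simp: fib)
  finally show ?thesis by (simp add: sum_distrib_left)
qed

lemma real_choose2: "real (k choose 2) = real k * (real k - 1) / 2"
proof -
  have "(2::nat) dvd k * (k - 1)" by auto
  then show ?thesis by (cases k) (simp_all add: choose_two real_of_nat_div algebra_simps)
qed

lemma sum_Sigma': "finite A \<Longrightarrow> (\<forall>x\<in>A. finite (B x)) \<Longrightarrow> sum g (Sigma A B) = (\<Sum>x\<in>A. \<Sum>y\<in>B x. g (x,y))"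
  using sum.Sigma[of A B "\<lambda>x y. g (x,y)"] by simp

lemma card_Dset: "finite P \<Longrightarrow> card (Dset P) = card P choose 2"
  unfolding Dset_def by (rule n_subsets)

lemma Dset_avg:
  fixes h :: "nat set set \<Rightarrow> real"
  assumes f: "finite P" and k: "card P \<ge> 2"
  shows "(\<Sum>D\<in>Dset P. h D) / real (card (Dset P)) = (\<Sum>x\<in>Off P. h {fst x, snd x}) / (real (card P) * (real (card P) - 1))"
proof -
  have "(\<Sum>D\<in>Dset P. h D) / real (card (Dset P)) = (\<Sum>D\<in>Dset P. h D) / (real (card P) * (real (card P) - 1) / 2)"
    by (simp add: card_Dset[OF f] real_choose2)
  also have "\<dots> = 2 * (\<Sum>D\<in>Dset P. h D) / (real (card P) * (real (card P) - 1))"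
    by (simp add: field_simps)
  finally show ?thesis using pairs_sum[OF f, of h] by simp
qed

lemma sum_Off_fst:
  fixes h :: "nat set \<Rightarrow> real"
  assumes f: "finite P"
  shows "(\<Sum>x\<in>Off P. h (fst x)) = (real (card P) - 1) * (\<Sum>A\<in>P. h A)"
proof (cases "P = {}")
  case False
  then have "Suc 0 \<le> card P" using f by (simp add: Suc_leI card_gt_0_iff)
  then show ?thesis using f by (simp add: Off_def sum_Sigma' sum_distrib_right
       of_nat_diff mult.commute)
qed (simp add: Off_def)

lemma sum_Off_snd:
  fixes h :: "nat set \<Rightarrow> real"
  assumes f: "finite P"
  shows "(\<Sum>x\<in>Off P. h (snd x)) = (real (card P) - 1) * (\<Sum>A\<in>P. h A)"
proof -
  have "(\<Sum>x\<in>Off P. h (snd x)) = (\<Sum>x\<in>Off P. h (fst x))"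
    by (rule sum.reindex_bij_witness[where i="\<lambda>(a,b). (b,a)" and j="\<lambda>(a,b). (b,a)"]) (auto simp: Off_def)
  then show ?thesis using sum_Off_fst[OF f] by simp
qed

lemma sum_Off_prod:
  fixes h :: "nat set \<Rightarrow> real"
  assumes f: "finite P"
  shows "(\<Sum>x\<in>Off P. h (fst x) * h (snd x)) = (\<Sum>A\<in>P. h A)^2 - (\<Sum>A\<in>P. h A ^ 2)"
proof -
  have "(\<Sum>x\<in>Off P. h (fst x) * h (snd x)) = (\<Sum>A\<in>P. \<Sum>B\<in>P - {A}. h A * h B)"
    using f by (simp add: Off_def sum_Sigma')
  also have "\<dots> = (\<Sum>A\<in>P. h A * ((\<Sum>B\<in>P. h B) - h A))"
    using f by (intro sum.cong refl) (simp add: sum_distrib_left[symmetric] sum_diff1)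
  also have "\<dots> = (\<Sum>A\<in>P. h A)^2 - (\<Sum>A\<in>P. h A ^ 2)"
    by (simp add: algebra_simps sum_subtractf sum_distrib_right[symmetric] power2_eq_square)
  finally show ?thesis .
qed

lemma ind_sq: "ind A * ind A = ind A" by (simp add: ind_def)

lemma merge_avg1:
  assumes g: "good U P" and k: "card P \<ge> 2"
  shows "(\<Sum>D\<in>Dset P. real (sg (mg P D))) / real (card (Dset P))
       = real (sg P) * (real (card P) - 2) / real (card P)"
proof -
  have f: "finite P" using g by (simp add: good_def)
  let ?s = "real (sg P)" and ?k = "real (card P)"
  have "(\<Sum>x\<in>Off P. real (sg (mg P {fst x, snd x}))) = (\<Sum>x\<in>Off P. ?s - ind (fst x) - ind (snd x))"
    by (intro sum.cong refl) (auto simp: Off_def intro!: sg_mg[OF g])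
  also have "\<dots> = real (card (Off P)) * ?s - (\<Sum>x\<in>Off P. ind (fst x)) - (\<Sum>x\<in>Off P. ind (snd x))"
    by (simp add: sum_subtractf)
  also have "\<dots> = ?k * (?k - 1) * ?s - 2 * (?k - 1) * ?s"
    using k by (simp add: sum_Off_fst[OF f] sum_Off_snd[OF f] sg_sum[OF f, symmetric] card_Off[OF f] of_nat_diff)
  finally have eq: "(\<Sum>x\<in>Off P. real (sg (mg P {fst x, snd x}))) = ?k * (?k - 1) * ?s - 2 * (?k - 1) * ?s" .
  have "?k \<ge> 2" using k by simp
  then show ?thesis
    unfolding Dset_avg[OF f k] eq by (simp add: field_simps)
qed

lemma merge_avg2:
  assumes g: "good U P" and k: "card P \<ge> 2"
  shows "(\<Sum>D\<in>Dset P. real (sg (mg P D)) * (real (sg (mg P D)) - 1)) / real (card (Dset P))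
       = real (sg P) * (real (sg P) - 1) * (real (card P) - 2) * (real (card P) - 3) / (real (card P) * (real (card P) - 1))"
proof -
  have f: "finite P" using g by (simp add: good_def)
  let ?s = "real (sg P)" and ?k = "real (card P)"
  have "(\<Sum>x\<in>Off P. real (sg (mg P {fst x, snd x})) * (real (sg (mg P {fst x, snd x})) - 1))
     = (\<Sum>x\<in>Off P. ?s * (?s - 1) - (2 * ?s - 2) * ind (fst x) - (2 * ?s - 2) * ind (snd x) + 2 * (ind (fst x) * ind (snd x)))"
  proof (intro sum.cong refl)
    fix x assume "x \<in> Off P"
    then have e: "real (sg (mg P {fst x, snd x})) = ?s - ind (fst x) - ind (snd x)"
      by (auto simp: Off_def intro!: sg_mg[OF g])
    have r: "(t-a-b)*(t-a-b-1) = t*(t-1) - (2*t-2)*a - (2*t-2)*b + 2*(a*b) + (a*a-a) + (b*b-b)" for t a b :: real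
      by algebra
    show "real (sg (mg P {fst x, snd x})) * (real (sg (mg P {fst x, snd x})) - 1)
      = ?s * (?s - 1) - (2 * ?s - 2) * ind (fst x) - (2 * ?s - 2) * ind (snd x) + 2 * (ind (fst x) * ind (snd x))"
      unfolding e r ind_sq by simp
  qed
  also have "\<dots> = ?k * (?k - 1) * (?s * (?s - 1)) - (2 * ?s - 2) * ((?k - 1) * ?s) - (2 * ?s - 2) * ((?k - 1) * ?s) + 2 * (?s^2 - ?s)"
  proof -
    have c: "real (card (Off P)) = ?k * (?k - 1)" using k by (simp add: card_Off[OF f] of_nat_diff)
    have sq: "(\<Sum>A\<in>P. ind A ^ 2) = ?s" unfolding power2_eq_square ind_sq sg_sum[OF f] ..
    show ?thesis
      by (simp add: sum.distrib sum_subtractf sum_distrib_left[symmetric] sum_Off_fst[OF f] sum_Off_snd[OF f]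
          sum_Off_prod[OF f] sg_sum[OF f, symmetric] c sq)
  qed
  finally have eq: "(\<Sum>x\<in>Off P. real (sg (mg P {fst x, snd x})) * (real (sg (mg P {fst x, snd x})) - 1)) = 
    ?k * (?k - 1) * (?s * (?s - 1)) - (2 * ?s - 2) * ((?k - 1) * ?s) - (2 * ?s - 2) * ((?k - 1) * ?s) + 2 * (?s^2 - ?s)" .
  have "?k \<ge> 2" using k by simp
  then show ?thesis
    unfolding Dset_avg[OF f k] eq by (simp add: field_simps power2_eq_square)
qed


abbreviation E :: "'a pmf \<Rightarrow> ('a \<Rightarrow> real) \<Rightarrow> real" where
  "E p f \<equiv> measure_pmf.expectation p f"

lemma E_cong_supp: "(\<And>x. x \<in> set_pmf p \<Longrightarrow> f x = g x) \<Longrightarrow> E p f = E p g"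
  by (intro integral_cong_AE) (auto simp: AE_measure_pmf_iff)

lemma integral_bind_pmf_fin:
  fixes f :: "'b \<Rightarrow> real"
  assumes fM: "finite (set_pmf M)" and fN: "\<And>x. x \<in> set_pmf M \<Longrightarrow> finite (set_pmf (N x))"
  shows "E (bind_pmf M N) f = E M (\<lambda>x. E (N x) f)"
proof -
  define A where "A = (\<Union>x\<in>set_pmf M. set_pmf (N x))"
  have fA: "finite A" using fM fN by (auto simp: A_def)
  have "E (bind_pmf M N) f = (\<Sum>a\<in>A. f a * pmf (bind_pmf M N) a)"
    by (rule integral_measure_pmf_real[OF fA]) (auto simp: A_def)
  also have "\<dots> = (\<Sum>a\<in>A. f a * (\<Sum>x\<in>set_pmf M. pmf (N x) a * pmf M x))"
    by (intro sum.cong refl arg_cong2[where f="(*)"] pmf_bind[THEN trans] integral_measure_pmf_real[OF fM]) auto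
  also have "\<dots> = (\<Sum>x\<in>set_pmf M. (\<Sum>a\<in>A. f a * pmf (N x) a) * pmf M x)"
    by (simp add: sum_distrib_left sum_distrib_right mult.assoc) (rule sum.swap)
  also have "\<dots> = (\<Sum>x\<in>set_pmf M. E (N x) f * pmf M x)"
    by (intro sum.cong refl arg_cong2[where f="(*)"] integral_measure_pmf_real[OF fA, symmetric])
       (auto simp: A_def)
  also have "\<dots> = E M (\<lambda>x. E (N x) f)"
    by (rule integral_measure_pmf_real[OF fM, symmetric]) auto
  finally show ?thesis .
qed

lemma merge_step_eq: "merge_step P = map_pmf (mg P) (pmf_of_set (Dset P))"
  unfolding merge_step_def Dset_def mg_def[abs_def] ..

lemma Dset_fin: "finite P \<Longrightarrow> finite (Dset P)"
  by (rule finite_subset[of _ "Pow P"]) (auto simp: Dset_def)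

lemma Dset_ne: "finite P \<Longrightarrow> card P \<ge> 2 \<Longrightarrow> Dset P \<noteq> {}"
  using card_Dset[of P] by (metis card.empty zero_less_binomial_iff not_less zero_less_iff_neq_zero)

lemma Dset_elem: "D \<in> Dset P \<Longrightarrow> \<exists>A B. D = {A,B} \<and> A \<in> P \<and> B \<in> P \<and> A \<noteq> B"
proof -
  assume "D \<in> Dset P"
  then have "D \<subseteq> P" "card D = 2" by (auto simp: Dset_def)
  then obtain A B where "D = {A,B}" "A \<noteq> B" by (meson card_2_iff)
  with \<open>D \<subseteq> P\<close> show ?thesis by auto
qed

lemma mg_good:
  assumes "good U P" "D \<in> Dset P"
  shows "good U (mg P D)" "card (mg P D) = card P - 1"
    "\<And>i. {i} \<in> mg P D \<Longrightarrow> {i} \<in> P"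
proof -
  obtain A B where "D = {A,B}" "A \<in> P" "B \<in> P" "A \<noteq> B" using Dset_elem[OF assms(2)] by blast
  then show "good U (mg P D)" "card (mg P D) = card P - 1" "\<And>i. {i} \<in> mg P D \<Longrightarrow> {i} \<in> P"
    using mg_two[OF assms(1)] by auto
qed

lemma chain_support:
  "good U P \<Longrightarrow> card P = Suc j \<Longrightarrow> Ps \<in> set_pmf (chain_from j P) \<Longrightarrow>
   length Ps = Suc j \<and> Ps ! 0 = P \<and> (\<forall>q\<le>j. good U (Ps!q) \<and> card (Ps!q) = Suc j - q)
   \<and> (\<forall>q<j. \<forall>i. {i} \<in> Ps ! Suc q \<longrightarrow> {i} \<in> Ps ! q)"
proof (induction j arbitrary: P Ps)
  case 0
  then show ?case by simp
next
  case (Suc j)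
  have fP: "finite P" using Suc.prems by (simp add: good_def)
  from Suc.prems(3) obtain D Ps' where D: "D \<in> Dset P" and Ps: "Ps = P # Ps'"
    and Ps': "Ps' \<in> set_pmf (chain_from j (mg P D))"
    using Dset_fin[OF fP] Dset_ne[OF fP] Suc.prems(2) by (auto simp: merge_step_eq)
  note mgf = mg_good[OF Suc.prems(1) D]
  have "card (mg P D) = Suc j" using mgf(2) Suc.prems(2) by simp
  note IH = Suc.IH[OF mgf(1) this Ps']
  show ?case
  proof (intro conjI allI impI)
    show "length Ps = Suc (Suc j)" "Ps ! 0 = P" using IH Ps by auto
  next
    fix q assume "q \<le> Suc j"
    then show "good U (Ps ! q)" "card (Ps ! q) = Suc (Suc j) - q"
      using IH Ps Suc.prems by (cases q; auto)+
  next
    fix q i assume "q < Suc j" "{i} \<in> Ps ! Suc q"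
    then show "{i} \<in> Ps ! q"
      using IH Ps mgf(3) by (cases q) auto
  qed
qed

lemma chain_finite:
  "good U P \<Longrightarrow> card P = Suc j \<Longrightarrow> finite (set_pmf (chain_from j P))"
proof (induction j arbitrary: P)
  case 0
  then show ?case by simp
next
  case (Suc j)
  have fP: "finite P" using Suc.prems by (simp add: good_def)
  have "set_pmf (chain_from (Suc j) P) = (\<Union>D\<in>Dset P. Cons P ` set_pmf (chain_from j (mg P D)))"
    using Dset_fin[OF fP] Dset_ne[OF fP] Suc.prems(2) by (auto simp: merge_step_eq)
  moreover have "finite (set_pmf (chain_from j (mg P D)))" if "D \<in> Dset P" for D
    using Suc.IH[OF mg_good(1)[OF Suc.prems(1) that]] mg_good(2)[OF Suc.prems(1) that] Suc.prems(2) by simp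
  ultimately show ?case using Dset_fin[OF fP] by simp
qed

lemma chain_step:
  fixes F :: "nat set set list \<Rightarrow> real"
  assumes g: "good U P" and c: "card P = Suc (Suc j)"
  shows "E (chain_from (Suc j) P) F = (\<Sum>D\<in>Dset P. E (chain_from j (mg P D)) (\<lambda>Ps. F (P # Ps))) / real (card (Dset P))"
proof -
  have fP: "finite P" using g by (simp add: good_def)
  have "E (chain_from (Suc j) P) F = E (merge_step P) (\<lambda>Q. E (map_pmf (Cons P) (chain_from j Q)) F)"
    unfolding chain_from.simps
  proof (rule integral_bind_pmf_fin)
    show "finite (set_pmf (merge_step P))" using Dset_fin[OF fP] Dset_ne[OF fP] c by (simp add: merge_step_eq)
    fix Q assume "Q \<in> set_pmf (merge_step P)"
    then obtain D where "D \<in> Dset P" "Q = mg P D" using Dset_fin[OF fP] Dset_ne[OF fP] c by (auto simp: merge_step_eq)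
    then show "finite (set_pmf (map_pmf (Cons P) (chain_from j Q)))"
      using chain_finite[OF mg_good(1)[OF g]] mg_good(2)[OF g] c by simp
  qed
  also have "\<dots> = (\<Sum>D\<in>Dset P. E (chain_from j (mg P D)) (\<lambda>Ps. F (P # Ps))) / real (card (Dset P))"
    using Dset_fin[OF fP] Dset_ne[OF fP] c by (simp add: merge_step_eq integral_pmf_of_set)
  finally show ?thesis .
qed

lemma sg_le: "finite P \<Longrightarrow> sg P \<le> card P"
proof -
  assume f: "finite P"
  have "sg P = card ((\<lambda>i. {i}) ` {i. {i} \<in> P})" unfolding sg_def by (subst card_image) (auto simp: inj_on_def)
  also have "\<dots> \<le> card P" using f by (intro card_mono) auto
  finally show ?thesis .
qed

lemma sg_small:
  assumes g: "good U P" and U: "finite U" "card U \<ge> 3" and c: "card P \<le> 2"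
  shows "sg P < card P"
proof -
  have f: "finite P" and UP: "\<Union>P = U" using g by (auto simp: good_def)
  have "sg P \<le> card P" by (rule sg_le[OF f])
  moreover have "sg P \<noteq> card P"
  proof
    assume eq: "sg P = card P"
    have img: "(\<lambda>i. {i}) ` {i. {i} \<in> P} \<subseteq> P" by auto
    have "card ((\<lambda>i. {i}) ` {i. {i} \<in> P}) = sg P" unfolding sg_def by (subst card_image) (auto simp: inj_on_def)
    then have "(\<lambda>i. {i}) ` {i. {i} \<in> P} = P" using card_subset_eq[OF f img] eq by simp
    then have "U = {i. {i} \<in> P}" using UP by auto
    then have "card U = sg P" by (simp add: sg_def)
    then show False using eq c U by simp
  qed
  ultimately show ?thesis by simp
qed


definition f1 :: "nat \<Rightarrow> nat \<Rightarrow> real" where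
  "f1 k a = real a * (real a - 1) / (real k * (real k - 1))"
definition g2 :: "nat \<Rightarrow> nat \<Rightarrow> real" where
  "g2 k a = real a * (real a - 1)^2 * (real a - 2) / (real k * (real k - 1)^2 * (real k - 2))"

lemma avg_mult: "(\<Sum>D\<in>S. h D * c) / real (card S) = ((\<Sum>D\<in>S. h D) / real (card S)) * (c::real)"
  by (simp add: sum_distrib_right)

lemma alg1: "(k::real) \<ge> 3 \<Longrightarrow> s * (k - 2) / k * (a * (a - 1) / ((k - 1) * (k - 2))) = s * (a * (a - 1) / (k * (k - 1)))"
proof -
  assume "k \<ge> 3"
  then have "k \<noteq> 0" "k - 1 \<noteq> 0" "k - 2 \<noteq> 0" by auto
  then show ?thesis by (simp add: divide_simps)
qed

lemma E_chain0: "good U P \<Longrightarrow> card P = Suc j \<Longrightarrow> E (chain_from j P) (\<lambda>Ps. h (Ps ! 0)) = h P"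
proof -
  assume a: "good U P" "card P = Suc j"
  have "E (chain_from j P) (\<lambda>Ps. h (Ps ! 0)) = E (chain_from j P) (\<lambda>Ps. h P)"
    by (rule E_cong_supp) (use chain_support[OF a] in auto)
  then show ?thesis by simp
qed

lemma M1:
  assumes U: "finite U" "card U \<ge> 3"
  shows "good U P \<Longrightarrow> card P = Suc j \<Longrightarrow> r \<le> j \<Longrightarrow>
    E (chain_from j P) (\<lambda>Ps. real (sg (Ps!r))) = real (sg P) * f1 (Suc j) (Suc j - r)"
proof (induction j arbitrary: P r)
  case 0
  then have "sg P = 0" using sg_small[OF 0(1) U] by simp
  with 0 show ?case by (simp add: f1_def)
next
  case (Suc j)
  show ?case
  proof (cases r)
    case 0
    have "f1 (Suc (Suc j)) (Suc (Suc j)) = 1" by (simp add: f1_def)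
    then show ?thesis using E_chain0[OF Suc.prems(1,2), of "\<lambda>P. real (sg P)"] 0 by simp
  next
    case (Suc r')
    let ?k = "Suc (Suc j)"
    have fP: "finite P" using Suc.prems by (simp add: good_def)
    have "E (chain_from (Suc j) P) (\<lambda>Ps. real (sg (Ps!r)))
        = (\<Sum>D\<in>Dset P. E (chain_from j (mg P D)) (\<lambda>Ps. real (sg ((P # Ps) ! r)))) / real (card (Dset P))"
      by (rule chain_step[OF Suc.prems(1,2)])
    also have "\<dots> = (\<Sum>D\<in>Dset P. real (sg (mg P D)) * f1 (Suc j) (Suc j - r')) / real (card (Dset P))"
    proof (intro arg_cong2[where f="(/)"] sum.cong refl)
      fix D assume D: "D \<in> Dset P"
      show "E (chain_from j (mg P D)) (\<lambda>Ps. real (sg ((P # Ps) ! r))) = real (sg (mg P D)) * f1 (Suc j) (Suc j - r')"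
        using Suc.IH[OF mg_good(1)[OF Suc.prems(1) D], of r'] mg_good(2)[OF Suc.prems(1) D] Suc.prems Suc by simp
    qed
    also have "\<dots> = real (sg P) * (real ?k - 2) / real ?k * f1 (Suc j) (Suc j - r')"
    proof -
      have m: "(\<Sum>D\<in>Dset P. real (sg (mg P D))) / real (card (Dset P)) = real (sg P) * (real ?k - 2) / real ?k"
        using merge_avg1[OF Suc.prems(1)] Suc.prems(2) by simp
      show ?thesis by (simp only: avg_mult m)
    qed
    also have "\<dots> = real (sg P) * f1 ?k (?k - r)"
    proof (cases j)
      case 0
      then show ?thesis using Suc.prems Suc by (simp add: f1_def)
    next
      case (Suc j')
      have "real ?k \<ge> 3" using Suc by simp
      from alg1[OF this, of "real (sg P)" "real (Suc j - r')"]
      show ?thesis using \<open>r = Suc r'\<close> Suc.prems(3) by (simp add: f1_def of_nat_diff)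
    qed
    finally show ?thesis .
  qed
qed

lemma g2_small: "1 \<le> a \<Longrightarrow> a \<le> 2 \<Longrightarrow> g2 k a = 0"
  by (cases a; cases "a - 1") (auto simp: g2_def)

lemma g2_same: "k \<ge> 3 \<Longrightarrow> g2 k k = 1"
  by (simp add: g2_def)

lemma alg2:
  assumes "k \<ge> 4"
  shows "s * (s - 1) * (real k - 2) * (real k - 3) / (real k * (real k - 1)) * g2 (k - 1) a = s * (s - 1) * g2 k a"
proof -
  have r: "real (k - 1) = real k - 1" using assms by (simp add: of_nat_diff)
  have "real k \<ge> 4" using assms by simp
  then have "real k \<noteq> 0" "real k - 1 \<noteq> 0" "real k - 2 \<noteq> 0" "real k - 3 \<noteq> 0" "real k - 1 - 1 \<noteq> 0" "real k - 1 - 2 \<noteq> 0" by auto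
  then show ?thesis unfolding g2_def r by (simp add: divide_simps) (simp add: algebra_simps power2_eq_square)
qed

lemma M2:
  assumes U: "finite U" "card U \<ge> 3"
  shows "good U P \<Longrightarrow> card P = Suc j \<Longrightarrow> r \<le> j \<Longrightarrow>
    E (chain_from j P) (\<lambda>Ps. real (sg (Ps!r)) * (real (sg (Ps!r)) - 1)) = real (sg P) * (real (sg P) - 1) * g2 (Suc j) (Suc j - r)"
proof (induction j arbitrary: P r)
  case 0
  then have "sg P = 0" using sg_small[OF 0(1) U] by simp
  with 0 show ?case by simp
next
  case (Suc j)
  show ?case
  proof (cases r)
    case 0
    have "real (sg P) * (real (sg P) - 1) = real (sg P) * (real (sg P) - 1) * g2 (Suc (Suc j)) (Suc (Suc j))"
    proof (cases "j = 0")
      case True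
      then have "sg P < 2" using sg_small[OF Suc.prems(1) U] Suc.prems(2) by simp
      then have "sg P = 0 \<or> sg P = 1" by auto
      then show ?thesis by auto
    next
      case False
      then show ?thesis using g2_same[of "Suc (Suc j)"] by simp
    qed
    then show ?thesis using E_chain0[OF Suc.prems(1,2), of "\<lambda>P. real (sg P) * (real (sg P) - 1)"] 0 by simp
  next
    case (Suc r')
    let ?k = "Suc (Suc j)"
    have fP: "finite P" using Suc.prems by (simp add: good_def)
    have "E (chain_from (Suc j) P) (\<lambda>Ps. real (sg (Ps!r)) * (real (sg (Ps!r)) - 1))
        = (\<Sum>D\<in>Dset P. E (chain_from j (mg P D)) (\<lambda>Ps. real (sg ((P # Ps) ! r)) * (real (sg ((P # Ps) ! r)) - 1))) / real (card (Dset P))"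
      by (rule chain_step[OF Suc.prems(1,2)])
    also have "\<dots> = (\<Sum>D\<in>Dset P. real (sg (mg P D)) * (real (sg (mg P D)) - 1) * g2 (Suc j) (Suc j - r')) / real (card (Dset P))"
    proof (intro arg_cong2[where f="(/)"] sum.cong refl)
      fix D assume D: "D \<in> Dset P"
      show "E (chain_from j (mg P D)) (\<lambda>Ps. real (sg ((P # Ps) ! r)) * (real (sg ((P # Ps) ! r)) - 1)) = real (sg (mg P D)) * (real (sg (mg P D)) - 1) * g2 (Suc j) (Suc j - r')"
        using Suc.IH[OF mg_good(1)[OF Suc.prems(1) D], of r'] mg_good(2)[OF Suc.prems(1) D] Suc.prems Suc by simp
    qed
    also have "\<dots> = real (sg P) * (real (sg P) - 1) * (real ?k - 2) * (real ?k - 3) / (real ?k * (real ?k - 1)) * g2 (Suc j) (Suc j - r')"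
    proof -
      have m: "(\<Sum>D\<in>Dset P. real (sg (mg P D)) * (real (sg (mg P D)) - 1)) / real (card (Dset P)) = real (sg P) * (real (sg P) - 1) * (real ?k - 2) * (real ?k - 3) / (real ?k * (real ?k - 1))"
        using merge_avg2[OF Suc.prems(1)] Suc.prems(2) by simp
      show ?thesis by (simp only: avg_mult m)
    qed
    also have "\<dots> = real (sg P) * (real (sg P) - 1) * g2 ?k (?k - r)"
    proof (cases "j \<ge> 2")
      case False
      then have "1 \<le> Suc j - r'" "Suc j - r' \<le> 2" "1 \<le> ?k - r" "?k - r \<le> 2" using Suc.prems(3) \<open>r = Suc r'\<close> by auto
      then show ?thesis using g2_small by simp
    next
      case True
      then show ?thesis using alg2[of ?k "real (sg P)" "Suc j - r'"] \<open>r = Suc r'\<close> by simp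
    qed
    finally show ?thesis .
  qed
qed

lemma M3:
  assumes U: "finite U" "card U \<ge> 3"
  shows "good U P \<Longrightarrow> card P = Suc j \<Longrightarrow> q \<le> r \<Longrightarrow> r \<le> j \<Longrightarrow>
    E (chain_from j P) (\<lambda>Ps. G (Ps!q) * real (sg (Ps!r))) = E (chain_from j P) (\<lambda>Ps. G (Ps!q) * real (sg (Ps!q))) * f1 (Suc j - q) (Suc j - r)"
proof (induction j arbitrary: P q r)
  case 0
  then show ?case using E_chain0[OF 0(1,2), of "\<lambda>P. G P * real (sg P)"] sg_small[OF 0(1) U] by simp
next
  case (Suc j)
  show ?case
  proof (cases q)
    case 0
    have "E (chain_from (Suc j) P) (\<lambda>Ps. G (Ps!q) * real (sg (Ps!r))) = E (chain_from (Suc j) P) (\<lambda>Ps. G P * real (sg (Ps!r)))"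
      by (rule E_cong_supp) (use chain_support[OF Suc.prems(1,2)] 0 in auto)
    also have "\<dots> = G P * (real (sg P) * f1 (Suc (Suc j)) (Suc (Suc j) - r))"
      using M1[OF U Suc.prems(1,2) Suc.prems(4)] by simp
    finally show ?thesis using E_chain0[OF Suc.prems(1,2), of "\<lambda>P. G P * real (sg P)"] 0 by simp
  next
    case (Suc q')
    then obtain r' where r: "r = Suc r'" using Suc.prems(3) by (cases r) auto
    have "E (chain_from (Suc j) P) (\<lambda>Ps. G (Ps!q) * real (sg (Ps!r)))
        = (\<Sum>D\<in>Dset P. E (chain_from j (mg P D)) (\<lambda>Ps. G ((P#Ps)!q) * real (sg ((P # Ps) ! r)))) / real (card (Dset P))"
      by (rule chain_step[OF Suc.prems(1,2)])
    also have "\<dots> = (\<Sum>D\<in>Dset P. E (chain_from j (mg P D)) (\<lambda>Ps. G ((P#Ps)!q) * real (sg ((P # Ps) ! q))) * f1 (Suc j - q') (Suc j - r')) / real (card (Dset P))"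
    proof (intro arg_cong2[where f="(/)"] sum.cong refl)
      fix D assume D: "D \<in> Dset P"
      show "E (chain_from j (mg P D)) (\<lambda>Ps. G ((P#Ps)!q) * real (sg ((P # Ps) ! r))) = E (chain_from j (mg P D)) (\<lambda>Ps. G ((P#Ps)!q) * real (sg ((P # Ps) ! q))) * f1 (Suc j - q') (Suc j - r')"
        using Suc.IH[OF mg_good(1)[OF Suc.prems(1) D], of q' r'] mg_good(2)[OF Suc.prems(1) D] Suc.prems Suc r by simp
    qed
    also have "\<dots> = (\<Sum>D\<in>Dset P. E (chain_from j (mg P D)) (\<lambda>Ps. G ((P#Ps)!q) * real (sg ((P # Ps) ! q)))) / real (card (Dset P)) * f1 (Suc j - q') (Suc j - r')"
      by (rule avg_mult)
    also have "\<dots> = E (chain_from (Suc j) P) (\<lambda>Ps. G (Ps!q) * real (sg (Ps!q))) * f1 (Suc j - q') (Suc j - r')"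
      by (subst chain_step[OF Suc.prems(1,2)]) (rule refl)
    finally show ?thesis using Suc r by simp
  qed
qed


lemma prob_Exp1: "prob_space Exp1"
  unfolding Exp1_def by (rule prob_space_exponential_density) simp

lemma distr_Exp1: "distributed Exp1 lborel (\<lambda>x. x) (exponential_density 1)"
  unfolding distributed_def Exp1_def
  by (auto simp: distr_id2)

lemma Exp1_moment: "has_bochner_integral Exp1 (\<lambda>x. x ^ i) (fact i)"
proof -
  interpret prob_space Exp1 by (rule prob_Exp1)
  show ?thesis using has_bochner_integral_erlang_ith_moment[OF _ distr_Exp1, of i] by simp
qed

lemma Exp1_int1: "integrable Exp1 (\<lambda>x. x)" "integral\<^sup>L Exp1 (\<lambda>x. x) = 1"
  using Exp1_moment[of 1] unfolding has_bochner_integral_iff by auto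

lemma Exp1_int2: "integrable Exp1 (\<lambda>x. x^2)" "integral\<^sup>L Exp1 (\<lambda>x. x^2) = 2"
  using Exp1_moment[of 2] unfolding has_bochner_integral_iff by auto

lemma Exp1_AE: "AE x in Exp1. 0 \<le> x"
  unfolding Exp1_def by (subst AE_density) (auto simp: exponential_density_def)

lemma Exp1_int_const: "integrable Exp1 (\<lambda>x. 1::real)" "integral\<^sup>L Exp1 (\<lambda>x. 1::real) = 1"
proof -
  interpret prob_space Exp1 by (rule prob_Exp1)
  show "integrable Exp1 (\<lambda>x. 1::real)" "integral\<^sup>L Exp1 (\<lambda>x. 1::real) = 1" by (auto simp: prob_space)
qed

lemma psf: "product_sigma_finite (\<lambda>_. Exp1)"
  unfolding product_sigma_finite_def using prob_Exp1 prob_space_imp_sigma_finite by blast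

lemma W_mom:
  fixes I :: "nat set"
  assumes I: "finite I" and jl: "j \<in> I" "l \<in> I"
  shows "integrable (PiM I (\<lambda>_. Exp1)) (\<lambda>W. W j * W l)"
    "integral\<^sup>L (PiM I (\<lambda>_. Exp1)) (\<lambda>W. W j * W l) = (if j = l then 2 else 1)"
proof -
  interpret product_sigma_finite "\<lambda>_. Exp1" by (rule psf)
  define f where "f i x = (if j = l then (if i = j then x^2 else 1) else (if i = j \<or> i = l then x else 1))" for i and x :: real
  have fe: "f i = (if j = l \<and> i = j then (\<lambda>x. x^2) else if j \<noteq> l \<and> (i = j \<or> i = l) then (\<lambda>x. x) else (\<lambda>x. 1))" for i
    by (auto simp: f_def fun_eq_iff)
  have fi: "integrable Exp1 (f i)" for i
    unfolding fe using Exp1_int1 Exp1_int2 Exp1_int_const by (simp only: if_split_asm split: if_split) simp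
  have fint: "integral\<^sup>L Exp1 (f i) = (if j = l \<and> i = j then 2 else 1)" for i
    unfolding fe using Exp1_int1 Exp1_int2 Exp1_int_const by (simp only: split: if_split) simp
  have eq: "(\<Prod>i\<in>I. f i (W i)) = W j * W l" for W :: "nat \<Rightarrow> real"
  proof (cases "j = l")
    case True
    have "(\<Prod>i\<in>I. f i (W i)) = (\<Prod>i\<in>I. if i = j then W i ^ 2 else 1)"
      unfolding f_def using True by simp
    also have "\<dots> = W j ^ 2" using I jl by (simp add: prod.delta)
    finally show ?thesis using True by (simp add: power2_eq_square)
  next
    case False
    have "(\<Prod>i\<in>I. f i (W i)) = (\<Prod>i\<in>I. if i \<in> {j, l} then W i else 1)"
      unfolding f_def using False by simp
    also have "\<dots> = prod W (I \<inter> {j,l})"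
    proof -
      have "{i. i = j \<or> i = l} = {j, l}" by auto
      then show ?thesis using I by (simp add: prod.If_cases)
    qed
    also have "I \<inter> {j,l} = {j,l}" using jl by auto
    finally show ?thesis using False by simp
  qed
  have "integrable (PiM I (\<lambda>_. Exp1)) (\<lambda>W. \<Prod>i\<in>I. f i (W i))"
    by (rule product_integrable_prod[OF I fi])
  then show "integrable (PiM I (\<lambda>_. Exp1)) (\<lambda>W. W j * W l)" unfolding eq .
  have "integral\<^sup>L (PiM I (\<lambda>_. Exp1)) (\<lambda>W. \<Prod>i\<in>I. f i (W i)) = (\<Prod>i\<in>I. integral\<^sup>L Exp1 (f i))"
    by (rule product_integral_prod[OF I fi])
  also have "\<dots> = (\<Prod>i\<in>I. if j = l \<and> i = j then 2 else 1)" unfolding fint ..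
  also have "\<dots> = (if j = l then 2 else 1)" using I jl by (simp add: prod.delta)
  finally show "integral\<^sup>L (PiM I (\<lambda>_. Exp1)) (\<lambda>W. W j * W l) = (if j = l then 2 else 1)" unfolding eq .
qed

lemma W_mom1:
  fixes I :: "nat set"
  assumes I: "finite I" and j: "j \<in> I"
  shows "integrable (PiM I (\<lambda>_. Exp1)) (\<lambda>W. W j)"
    "integral\<^sup>L (PiM I (\<lambda>_. Exp1)) (\<lambda>W. W j) = 1"
proof -
  interpret product_sigma_finite "\<lambda>_. Exp1" by (rule psf)
  define f where "f i x = (if i = j then x else 1)" for i and x :: real
  have fe: "f i = (if i = j then (\<lambda>x. x) else (\<lambda>x. 1))" for i
    by (auto simp: f_def fun_eq_iff)
  have fi: "integrable Exp1 (f i)" for i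
    unfolding fe using Exp1_int1 Exp1_int_const by (simp only: split: if_split) simp
  have fint: "integral\<^sup>L Exp1 (f i) = 1" for i
    unfolding fe using Exp1_int1 Exp1_int_const by (simp only: split: if_split) simp
  have eq: "(\<Prod>i\<in>I. f i (W i)) = W j" for W :: "nat \<Rightarrow> real"
    unfolding f_def using I j by (simp add: prod.delta)
  have "integrable (PiM I (\<lambda>_. Exp1)) (\<lambda>W. \<Prod>i\<in>I. f i (W i))"
    by (rule product_integrable_prod[OF I fi])
  then show "integrable (PiM I (\<lambda>_. Exp1)) (\<lambda>W. W j)" unfolding eq .
  have "integral\<^sup>L (PiM I (\<lambda>_. Exp1)) (\<lambda>W. \<Prod>i\<in>I. f i (W i)) = (\<Prod>i\<in>I. integral\<^sup>L Exp1 (f i))"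
    by (rule product_integral_prod[OF I fi])
  then show "integral\<^sup>L (PiM I (\<lambda>_. Exp1)) (\<lambda>W. W j) = 1" unfolding eq fint by simp
qed

lemma pair_prod:
  fixes f :: "'a \<Rightarrow> real" and h :: "'b \<Rightarrow> real"
  assumes M: "prob_space M" and fin: "finite (set_pmf p)" and f: "integrable M f"
  shows "integrable (M \<Otimes>\<^sub>M measure_pmf p) (\<lambda>\<omega>. f (fst \<omega>) * h (snd \<omega>))"
    "integral\<^sup>L (M \<Otimes>\<^sub>M measure_pmf p) (\<lambda>\<omega>. f (fst \<omega>) * h (snd \<omega>)) = integral\<^sup>L M f * measure_pmf.expectation p h"
proof -
  interpret M: prob_space M by (rule M)
  interpret pair_sigma_finite M "measure_pmf p"
    by (intro pair_sigma_finite.intro M.sigma_finite_measure_axioms) (rule measure_pmf.sigma_finite_measure_axioms)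
  have fm[measurable]: "f \<in> borel_measurable M" using f by auto
  have hm[measurable]: "h \<in> borel_measurable (measure_pmf p)" by simp
  show int: "integrable (M \<Otimes>\<^sub>M measure_pmf p) (\<lambda>\<omega>. f (fst \<omega>) * h (snd \<omega>))"
  proof (rule Fubini_integrable)
    show "(\<lambda>\<omega>. f (fst \<omega>) * h (snd \<omega>)) \<in> borel_measurable (M \<Otimes>\<^sub>M measure_pmf p)" by measurable
    have "integrable M (\<lambda>x. norm (f x) * (\<integral>y. norm (h y) \<partial>measure_pmf p))"
      using f by (intro integrable_mult_left) auto
    moreover have "(\<lambda>x. \<integral>y. norm (f (fst (x, y)) * h (snd (x, y))) \<partial>measure_pmf p) = (\<lambda>x. norm (f x) * (\<integral>y. norm (h y) \<partial>measure_pmf p))"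
      by (simp add: abs_mult)
    ultimately show "integrable M (\<lambda>x. \<integral>y. norm (f (fst (x, y)) * h (snd (x, y))) \<partial>measure_pmf p)"
      by simp
    show "AE x in M. integrable (measure_pmf p) (\<lambda>y. f (fst (x, y)) * h (snd (x, y)))"
      using fin by (simp add: integrable_measure_pmf_finite)
  qed
  have "integral\<^sup>L (M \<Otimes>\<^sub>M measure_pmf p) (\<lambda>(x,y). f x * h y) = (\<integral>x. (\<integral>y. f x * h y \<partial>measure_pmf p) \<partial>M)"
    using integral_fst[of "\<lambda>x y. f x * h y"] int by (simp add: split_beta')
  also have "\<dots> = integral\<^sup>L M f * measure_pmf.expectation p h"
    by simp
  finally show "integral\<^sup>L (M \<Otimes>\<^sub>M measure_pmf p) (\<lambda>\<omega>. f (fst \<omega>) * h (snd \<omega>)) = integral\<^sup>L M f * measure_pmf.expectation p h"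
    by (simp add: split_beta')
qed

lemma comp_meas[measurable]: "(\<lambda>W. W j) \<in> borel_measurable (PiM I (\<lambda>_. Exp1))"
proof (cases "j \<in> I")
  case True
  have "(\<lambda>x. x) \<in> measurable Exp1 borel" by (rule measurable_ident_sets) (simp add: Exp1_def)
  with measurable_component_singleton[OF True, of "\<lambda>_. Exp1"] show ?thesis by (rule measurable_compose)
next
  case False
  have "(\<lambda>W. undefined :: real) \<in> borel_measurable (PiM I (\<lambda>_. Exp1))" by simp
  then show ?thesis
    by (rule measurable_cong[THEN iffD1, rotated]) (use False in \<open>auto simp: space_PiM PiE_def extensional_def\<close>)
qed

lemma coal_T_sum: "coal_T n W k' = (\<Sum>k\<le>n. if k' = k then coal_T n W k else 0)"
  by (cases "k' \<le> n") (auto simp: coal_T_def)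

lemma T_meas[measurable]:
  "(\<lambda>\<omega>. coal_T n (fst \<omega>) (g (snd \<omega>))) \<in> borel_measurable (PiM I (\<lambda>_. Exp1) \<Otimes>\<^sub>M measure_pmf p)"
proof -
  have "(\<lambda>\<omega>. \<Sum>k\<le>n. if g (snd \<omega>) = k then coal_T n (fst \<omega>) k else 0) \<in> borel_measurable (PiM I (\<lambda>_. Exp1) \<Otimes>\<^sub>M measure_pmf p)"
    unfolding coal_T_def by measurable
  then show ?thesis by (subst coal_T_sum) 
qed

lemma AE_good:
  fixes p :: "'b pmf"
  assumes I: "finite I"
  shows "AE \<omega> in PiM I (\<lambda>_. Exp1) \<Otimes>\<^sub>M measure_pmf p. (\<forall>j\<in>I. 0 \<le> fst \<omega> j) \<and> snd \<omega> \<in> set_pmf p"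
proof -
  interpret M: prob_space "PiM I (\<lambda>_. Exp1)" by (intro prob_space_PiM prob_Exp1)
  interpret pair_sigma_finite "PiM I (\<lambda>_. Exp1)" "measure_pmf p"
    by (intro pair_sigma_finite.intro M.sigma_finite_measure_axioms) (rule measure_pmf.sigma_finite_measure_axioms)
  have "AE x in PiM I (\<lambda>_. Exp1). \<forall>j\<in>I. 0 \<le> x j"
    using I by (intro AE_finite_allI AE_PiM_component[OF prob_Exp1] Exp1_AE) auto
  then have ae: "AE x in PiM I (\<lambda>_. Exp1). AE y in measure_pmf p. (\<forall>j\<in>I. 0 \<le> fst (x,y) j) \<and> snd (x,y) \<in> set_pmf p"
    by eventually_elim (use AE_measure_pmf[of p] in auto)
  have [measurable]: "Measurable.pred (measure_pmf p) (\<lambda>y. y \<in> set_pmf p)" by simp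
  show ?thesis
    by (rule AE_pair_measure[OF _ ae]) (use I in measurable)
qed


lemma singletons_props:
  shows "good {1..n} (singletons n)" "card (singletons n) = n" "sg (singletons n) = n"
proof -
  have s: "singletons n = (\<lambda>i. {i}) ` {1..n}" by (auto simp: singletons_def)
  show "good {1..n} (singletons n)" unfolding good_def s by auto
  show c: "card (singletons n) = n" unfolding s by (subst card_image) (auto simp: inj_on_def)
  have "{i. {i} \<in> singletons n} = {1..n}" unfolding s by auto
  then show "sg (singletons n) = n" by (simp add: sg_def)
qed

definition pn :: "nat \<Rightarrow> nat set set list pmf" where "pn n = chain_from (n - 1) (singletons n)"

lemma pn_support:
  assumes n: "n \<ge> 1" and Ps: "Ps \<in> set_pmf (pn n)"
  shows "length Ps = n" "\<And>q. q \<le> n - 1 \<Longrightarrow> good {1..n} (Ps!q) \<and> card (Ps!q) = n - q"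
    "\<And>q i. q < n - 1 \<Longrightarrow> {i} \<in> Ps ! Suc q \<Longrightarrow> {i} \<in> Ps ! q"
  using chain_support[OF singletons_props(1), of n "n - 1" Ps] Ps n singletons_props(2)[of n]
  by (auto simp: pn_def)

lemma pn_finite: "n \<ge> 1 \<Longrightarrow> finite (set_pmf (pn n))"
  using chain_finite[OF singletons_props(1), of n "n - 1"] singletons_props(2)[of n] by (simp add: pn_def)

lemma upward:
  assumes n: "n \<ge> 1" and Ps: "Ps \<in> set_pmf (pn n)"
  shows "{i} \<in> Ps ! (q + d) \<Longrightarrow> q + d \<le> n - 1 \<Longrightarrow> {i} \<in> Ps ! q"
proof (induction d)
  case (Suc d)
  then show ?case using pn_support(3)[OF n Ps, of "q + d" i] by simp
qed simp

lemma rho_props: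
  assumes n: "n \<ge> 3" and Ps: "Ps \<in> set_pmf (pn n)" and i: "i \<in> {1..n}"
  shows "1 \<le> coal_rho n Ps i" "\<And>j. 2 \<le> j \<Longrightarrow> j \<le> n \<Longrightarrow> coal_rho n Ps i < j \<longleftrightarrow> {i} \<in> Ps ! (n - j)"
proof -
  have n1: "n \<ge> 1" using n by simp
  define K where "K = {k \<in> {1..n}. {i} \<notin> coal_pi n Ps k}"
  have rho: "coal_rho n Ps i = Max K" by (simp add: coal_rho_def K_def)
  have fK: "finite K" by (simp add: K_def)
  have "1 \<in> K"
  proof -
    have g: "good {1..n} (Ps ! (n - 1))" "card (Ps ! (n - 1)) = 1" using pn_support(2)[OF n1 Ps, of "n - 1"] n by auto
    then obtain B where B: "Ps ! (n - 1) = {B}" by (auto simp: card_Suc_eq)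
    then have "B = {1..n}" using g(1) by (simp add: good_def)
    moreover have "{i} \<noteq> {1..n}"
    proof
      assume "{i} = {1..n}"
      then have "card {i} = card {1..n}" by simp
      then show False using n by simp
    qed
    ultimately have "{i} \<notin> Ps ! (n - 1)" using B by auto
    then show ?thesis using n by (simp add: K_def coal_pi_def)
  qed
  then have K1: "K \<noteq> {}" by auto
  show "1 \<le> coal_rho n Ps i" unfolding rho using Max_ge[OF fK \<open>1 \<in> K\<close>] .
  fix j assume j: "2 \<le> j" "j \<le> n"
  show "coal_rho n Ps i < j \<longleftrightarrow> {i} \<in> Ps ! (n - j)"
  proof
    assume "coal_rho n Ps i < j"
    then have "j \<notin> K" using Max_ge[OF fK] rho by force
    then show "{i} \<in> Ps ! (n - j)" using j by (auto simp: K_def coal_pi_def)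
  next
    assume a: "{i} \<in> Ps ! (n - j)"
    have "\<forall>k\<in>K. k < j"
    proof
      fix k assume "k \<in> K"
      then have k: "k \<in> {1..n}" "{i} \<notin> Ps ! (n - k)" by (auto simp: K_def coal_pi_def)
      show "k < j"
      proof (rule ccontr)
        assume "\<not> k < j"
        then have e1: "(n - k) + (k - j) = n - j" "(n - k) + (k - j) \<le> n - 1" using j k by auto
        then have "{i} \<in> Ps ! ((n - k) + (k - j))" using a by simp
        then have "{i} \<in> Ps ! (n - k)" using upward[OF n1 Ps, of i "n - k" "k - j"] e1 by blast
        with k show False by simp
      qed
    qed
    then show "coal_rho n Ps i < j" unfolding rho using fK K1 by simp
  qed
qed

definition cc :: "nat \<Rightarrow> nat set set list \<Rightarrow> nat \<Rightarrow> real" where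
  "cc n Ps j = real (sg (Ps ! (n - j))) / real (j choose 2)"

definition Yf :: "nat \<Rightarrow> nat \<Rightarrow> (nat \<Rightarrow> real) \<times> nat set set list \<Rightarrow> real" where
  "Yf n m \<omega> = (\<Sum>j\<in>{m+1..n}. fst \<omega> j * cc n (snd \<omega>) j)"

lemma sum_identity:
  assumes n: "n \<ge> 3" and Ps: "Ps \<in> set_pmf (pn n)" and m: "1 \<le> m" "m \<le> n"
  shows "(\<Sum>i\<in>{1..n}. coal_T n W (max (coal_rho n Ps i) m)) = Yf n m (W, Ps)"
proof -
  have n1: "n \<ge> 1" using n by simp
  have "(\<Sum>i\<in>{1..n}. coal_T n W (max (coal_rho n Ps i) m))
      = (\<Sum>i\<in>{1..n}. \<Sum>j\<in>{m+1..n}. if coal_rho n Ps i < j then W j / real (j choose 2) else 0)"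
  proof (intro sum.cong refl)
    fix i
    have e: "{j \<in> {m+1..n}. coal_rho n Ps i < j} = {max (coal_rho n Ps i) m + 1..n}" by auto
    show "coal_T n W (max (coal_rho n Ps i) m) =
         (\<Sum>j\<in>{m + 1..n}. if coal_rho n Ps i < j then W j / real (j choose 2) else 0)"
      unfolding coal_T_def by (simp only: sum.inter_filter[symmetric, OF finite_atLeastAtMost] e)
  qed
  also have "\<dots> = (\<Sum>j\<in>{m+1..n}. \<Sum>i\<in>{1..n}. if coal_rho n Ps i < j then W j / real (j choose 2) else 0)"
    by (rule sum.swap)
  also have "\<dots> = (\<Sum>j\<in>{m+1..n}. W j / real (j choose 2) * real (card {i\<in>{1..n}. coal_rho n Ps i < j}))"
    by (intro sum.cong refl) (simp add: sum.If_cases Int_def)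
  also have "\<dots> = (\<Sum>j\<in>{m+1..n}. W j * cc n Ps j)"
  proof (intro sum.cong refl)
    fix j assume j: "j \<in> {m+1..n}"
    have "{i\<in>{1..n}. coal_rho n Ps i < j} = {i\<in>{1..n}. {i} \<in> Ps ! (n - j)}"
      using rho_props(2)[OF n Ps] j m by auto
    also have "\<dots> = {i. {i} \<in> Ps ! (n - j)}"
    proof -
      have "good {1..n} (Ps ! (n - j))" using pn_support(2)[OF n1 Ps, of "n - j"] j m by auto
      then show ?thesis by (auto simp: good_def)
    qed
    finally show "W j / real (j choose 2) * real (card {i\<in>{1..n}. coal_rho n Ps i < j}) = W j * cc n Ps j"
      by (simp add: cc_def sg_def)
  qed
  finally show ?thesis by (simp add: Yf_def)
qed


lemma coalescent_eq: "coalescent n = PiM {2..n} (\<lambda>_. Exp1) \<Otimes>\<^sub>M measure_pmf (pn n)"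
  by (simp add: coalescent_def pn_def)

lemma snd_meas[measurable]: "(\<lambda>\<omega>. h (snd \<omega>) :: real) \<in> borel_measurable (M \<Otimes>\<^sub>M measure_pmf p)"
proof -
  have "h \<in> borel_measurable (measure_pmf p)" by simp
  then show ?thesis by (rule measurable_compose[OF measurable_snd])
qed

lemma fst_comp_meas[measurable]: "(\<lambda>\<omega>. fst \<omega> j) \<in> borel_measurable (PiM I (\<lambda>_. Exp1) \<Otimes>\<^sub>M M)"
  by (rule measurable_compose[OF measurable_fst comp_meas])

lemma T_meas_const[measurable]:
  "(\<lambda>\<omega>. coal_T n (fst \<omega>) k) \<in> borel_measurable (PiM I (\<lambda>_. Exp1) \<Otimes>\<^sub>M measure_pmf p)"
  using T_meas[of n "\<lambda>_. k"] by simp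

lemma Yf_meas[measurable]: "Yf n m \<in> borel_measurable (PiM I (\<lambda>_. Exp1) \<Otimes>\<^sub>M measure_pmf p)"
  unfolding Yf_def by measurable

lemma ext_part_meas[measurable]: "ext_length_part n \<alpha> \<beta> \<in> borel_measurable (PiM I (\<lambda>_. Exp1) \<Otimes>\<^sub>M measure_pmf p)"
  unfolding ext_length_part_def Let_def by measurable

lemma ext_meas[measurable]: "ext_length n \<in> borel_measurable (PiM I (\<lambda>_. Exp1) \<Otimes>\<^sub>M measure_pmf p)"
  unfolding ext_length_def by measurable

lemma T_antitone:
  assumes W: "\<forall>j\<in>{2..n}. 0 \<le> W j" and kk: "k \<le> k'"
  shows "coal_T n W k' \<le> coal_T n W k"
  unfolding coal_T_def
proof (rule sum_mono2)
  show "{k' + 1..n} \<subseteq> {k + 1..n}" using kk by auto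
  fix j assume "j \<in> {k + 1..n} - {k' + 1..n}"
  show "0 \<le> W j / real (j choose 2)"
  proof (cases "j \<ge> 2")
    case True
    then show ?thesis using W \<open>j \<in> _\<close> by auto
  next
    case False
    then have j0: "j choose 2 = 0" by (intro binomial_eq_0) simp
    show ?thesis by (simp only: j0) simp
  qed
qed simp

lemma T_n: "coal_T n W n = 0" by (simp add: coal_T_def)

lemma T_nonneg: "\<forall>j\<in>{2..n}. 0 \<le> W j \<Longrightarrow> 0 \<le> coal_T n W k"
  using T_antitone[of n W k "max k n"] T_n[of n W] by (simp add: coal_T_def)

lemma T_min: "\<forall>j\<in>{2..n}. 0 \<le> W j \<Longrightarrow> min (coal_T n W a) (coal_T n W b) = coal_T n W (max a b)"
  using T_antitone[of n W a b] T_antitone[of n W b a] by (cases "a \<le> b") (auto simp: max_def min_def)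

lemma m_bounds:
  assumes n: "n \<ge> 1" and a: "0 \<le> \<alpha>" "\<alpha> \<le> 1"
  shows "1 \<le> nat \<lfloor>real n powr \<alpha>\<rfloor>" "nat \<lfloor>real n powr \<alpha>\<rfloor> \<le> n"
proof -
  have "1 \<le> real n powr \<alpha>" using n a by (intro ge_one_powr_ge_zero) auto
  then show "1 \<le> nat \<lfloor>real n powr \<alpha>\<rfloor>" by linarith
  have "real n powr \<alpha> \<le> real n powr 1" using n a by (intro powr_mono) auto
  then have "real n powr \<alpha> \<le> real n" using n by simp
  then show "nat \<lfloor>real n powr \<alpha>\<rfloor> \<le> n" by linarith
qed

lemma ext_part_pt:
  assumes n: "n \<ge> 3" and a: "0 \<le> \<alpha>" "\<alpha> \<le> 1" and W: "\<forall>j\<in>{2..n}. 0 \<le> W j"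
    and Ps: "Ps \<in> set_pmf (pn n)"
  shows "ext_length_part n \<alpha> 1 (W, Ps) = Yf n (nat \<lfloor>real n powr \<alpha>\<rfloor>) (W, Ps)"
proof -
  let ?m = "nat \<lfloor>real n powr \<alpha>\<rfloor>"
  have b: "nat \<lfloor>real n powr 1\<rfloor> = n" using n by simp
  have "ext_length_part n \<alpha> 1 (W, Ps) = (\<Sum>i\<in>{1..n}. coal_T n W (max (coal_rho n Ps i) ?m))"
    unfolding ext_length_part_def Let_def fst_conv snd_conv b
    by (intro sum.cong refl) (simp add: T_min[OF W] T_n T_nonneg[OF W])
  also have "\<dots> = Yf n ?m (W, Ps)"
    by (rule sum_identity[OF n Ps]) (use m_bounds[OF _ a, of n] n in auto)
  finally show ?thesis .
qed

lemma ext_pt: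
  assumes n: "n \<ge> 3" and Ps: "Ps \<in> set_pmf (pn n)"
  shows "ext_length n (W, Ps) = Yf n 1 (W, Ps)"
proof -
  have "ext_length n (W, Ps) = (\<Sum>i\<in>{1..n}. coal_T n W (max (coal_rho n Ps i) 1))"
    unfolding ext_length_def fst_conv snd_conv
  proof (intro sum.cong refl)
    fix i assume "i \<in> {1..n}"
    then have "1 \<le> coal_rho n Ps i" by (rule rho_props(1)[OF n Ps])
    then show "coal_T n W (coal_rho n Ps i) = coal_T n W (max (coal_rho n Ps i) 1)" by (simp add: max_absorb1)
  qed
  also have "\<dots> = Yf n 1 (W, Ps)"
    by (rule sum_identity[OF n Ps]) (use n in auto)
  finally show ?thesis .
qed

lemma AE_ext:
  assumes n: "n \<ge> 3" and a: "0 \<le> \<alpha>" "\<alpha> \<le> 1"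
  shows "AE \<omega> in coalescent n. ext_length_part n \<alpha> 1 \<omega> = Yf n (nat \<lfloor>real n powr \<alpha>\<rfloor>) \<omega>"
    "AE \<omega> in coalescent n. ext_length n \<omega> = Yf n 1 \<omega>"
proof -
  have ae: "AE \<omega> in coalescent n. (\<forall>j\<in>{2..n}. 0 \<le> fst \<omega> j) \<and> snd \<omega> \<in> set_pmf (pn n)"
    unfolding coalescent_eq by (rule AE_good) simp
  show "AE \<omega> in coalescent n. ext_length_part n \<alpha> 1 \<omega> = Yf n (nat \<lfloor>real n powr \<alpha>\<rfloor>) \<omega>"
    using ae by eventually_elim (use ext_part_pt[OF n a] in \<open>auto simp: split_beta'\<close>)
  show "AE \<omega> in coalescent n. ext_length n \<omega> = Yf n 1 \<omega>"
    using ae by eventually_elim (use ext_pt[OF n] in \<open>auto simp: split_beta'\<close>)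
qed


context
  fixes n :: nat
  assumes n: "n \<ge> 3"
begin

lemma U3: "finite {1..n}" "card {1..n} \<ge> 3" using n by auto

lemma sing_c: "card (singletons n) = Suc (n - 1)" using n singletons_props(2)[of n] by simp

lemma EC1: "a \<in> {1..n} \<Longrightarrow> E (pn n) (\<lambda>Ps. real (sg (Ps ! (n - a)))) = real n * f1 n a"
proof -
  assume a: "a \<in> {1..n}"
  then have r: "n - a \<le> n - 1" "Suc (n - 1) - (n - a) = a" "Suc (n - 1) = n" using n by auto
  show ?thesis using M1[OF U3 singletons_props(1) sing_c r(1)] r(2,3) singletons_props(3)[of n]
    by (simp add: pn_def)
qed

lemma ECm2: "a \<in> {1..n} \<Longrightarrow> E (pn n) (\<lambda>Ps. real (sg (Ps ! (n - a))) * (real (sg (Ps ! (n - a))) - 1)) = real n * (real n - 1) * g2 n a"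
proof -
  assume a: "a \<in> {1..n}"
  then have r: "n - a \<le> n - 1" "Suc (n - 1) - (n - a) = a" "Suc (n - 1) = n" using n by auto
  show ?thesis using M2[OF U3 singletons_props(1) sing_c r(1)] r(2,3) singletons_props(3)[of n]
    by (simp add: pn_def)
qed

lemma EC2: "a \<in> {1..n} \<Longrightarrow> E (pn n) (\<lambda>Ps. real (sg (Ps ! (n - a))) * real (sg (Ps ! (n - a)))) = real n * (real n - 1) * g2 n a + real n * f1 n a"
proof -
  assume a: "a \<in> {1..n}"
  have fin: "finite (set_pmf (pn n))" using pn_finite n by simp
  have "E (pn n) (\<lambda>Ps. real (sg (Ps ! (n - a))) * real (sg (Ps ! (n - a))))
     = E (pn n) (\<lambda>Ps. real (sg (Ps ! (n - a))) * (real (sg (Ps ! (n - a))) - 1) + real (sg (Ps ! (n - a))))"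
    by (simp add: algebra_simps)
  also have "\<dots> = E (pn n) (\<lambda>Ps. real (sg (Ps ! (n - a))) * (real (sg (Ps ! (n - a))) - 1)) + E (pn n) (\<lambda>Ps. real (sg (Ps ! (n - a))))"
    by (rule Bochner_Integration.integral_add) (simp_all add: integrable_measure_pmf_finite[OF fin])
  finally show ?thesis using ECm2[OF a] EC1[OF a] by simp
qed

lemma EC3: "b \<in> {1..n} \<Longrightarrow> a \<in> {1..n} \<Longrightarrow> b \<le> a \<Longrightarrow>
  E (pn n) (\<lambda>Ps. real (sg (Ps ! (n - a))) * real (sg (Ps ! (n - b)))) = (real n * (real n - 1) * g2 n a + real n * f1 n a) * f1 a b"
proof -
  assume ab: "b \<in> {1..n}" "a \<in> {1..n}" "b \<le> a"
  have e: "E (pn n) (\<lambda>Ps. real (sg (Ps ! (n - a))) * real (sg (Ps ! (n - b)))) =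
     E (pn n) (\<lambda>Ps. real (sg (Ps ! (n - a))) * real (sg (Ps ! (n - a)))) * f1 (Suc (n - 1) - (n - a)) (Suc (n - 1) - (n - b))"
    using M3[OF U3 singletons_props(1) sing_c, of "n - a" "n - b" "\<lambda>P. real (sg P)"] ab
    by (simp add: pn_def)
  have r: "Suc (n - 1) - (n - a) = a" "Suc (n - 1) - (n - b) = b" using ab n by auto
  show ?thesis using e EC2[OF ab(2)] unfolding r by simp
qed

definition e2 :: "nat \<Rightarrow> real" where
  "e2 a = (real n * (real n - 1) * g2 n a + real n * f1 n a) / (real (a choose 2))^2"

lemma Ecc: "a \<in> {2..n} \<Longrightarrow> E (pn n) (\<lambda>Ps. cc n Ps a) = 2 / (real n - 1)"
proof -
  assume a: "a \<in> {2..n}"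
  have "E (pn n) (\<lambda>Ps. cc n Ps a) = E (pn n) (\<lambda>Ps. real (sg (Ps ! (n - a)))) / real (a choose 2)"
    unfolding cc_def by simp
  also have "\<dots> = real n * f1 n a / (real a * (real a - 1) / 2)" using EC1[of a] a by (simp add: real_choose2)
  also have "\<dots> = 2 / (real n - 1)"
  proof -
    have "real a \<noteq> 0" "real a - 1 \<noteq> 0" "real n \<noteq> 0" "real n - 1 \<noteq> 0" using a n by auto
    then show ?thesis by (simp add: f1_def divide_simps)
  qed
  finally show ?thesis .
qed

lemma Ecc2: "a \<in> {2..n} \<Longrightarrow> b \<in> {2..n} \<Longrightarrow> E (pn n) (\<lambda>Ps. cc n Ps a * cc n Ps b) = e2 (max a b)"
proof -
  have main: "E (pn n) (\<lambda>Ps. cc n Ps a * cc n Ps b) = e2 a" if a: "a \<in> {2..n}" and b: "b \<in> {2..n}" and ba: "b \<le> a" for a b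
  proof -
    have "E (pn n) (\<lambda>Ps. cc n Ps a * cc n Ps b) = E (pn n) (\<lambda>Ps. real (sg (Ps ! (n - a))) * real (sg (Ps ! (n - b)))) / (real (a choose 2) * real (b choose 2))"
      unfolding cc_def by simp
    also have "\<dots> = (real n * (real n - 1) * g2 n a + real n * f1 n a) * f1 a b / (real (a choose 2) * real (b choose 2))"
      using EC3[of b a] a b ba by simp
    also have "\<dots> = e2 a"
    proof -
      have "real a \<noteq> 0" "real a - 1 \<noteq> 0" "real b \<noteq> 0" "real b - 1 \<noteq> 0" "real n \<noteq> 0" "real n - 1 \<noteq> 0" using a b n by auto
      then show ?thesis unfolding e2_def f1_def real_choose2 by (simp add: divide_simps power2_eq_square) (simp add: algebra_simps)
    qed
    finally show ?thesis .
  qed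
  assume a: "a \<in> {2..n}" and b: "b \<in> {2..n}"
  show ?thesis
  proof (cases "b \<le> a")
    case True
    then show ?thesis using main[OF a b] by (simp add: max_def)
  next
    case False
    then show ?thesis using main[OF b a] by (simp add: max_def mult.commute)
  qed
qed

lemma e2_eq: "a \<in> {2..n} \<Longrightarrow> e2 a = 4 * (real a - 2) / (real a * (real n - 1) * (real n - 2)) + 4 / (real a * (real a - 1) * (real n - 1))"
proof -
  assume a: "a \<in> {2..n}"
  have "real a \<noteq> 0" "real a - 1 \<noteq> 0" "real n \<noteq> 0" "real n - 1 \<noteq> 0" "real n - 2 \<noteq> 0" using a n by auto
  then show ?thesis unfolding e2_def f1_def g2_def real_choose2 by (simp add: divide_simps power2_eq_square) (simp add: algebra_simps)
qed

end


lemma dsum: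
  fixes e :: "nat \<Rightarrow> real"
  shows "m \<le> N \<Longrightarrow> (\<Sum>a\<in>{m+1..N}. \<Sum>b\<in>{m+1..N}. (if a = b then 2 else 1) * e (max a b))
       = (\<Sum>a\<in>{m+1..N}. 2 * (real a - real m) * e a)"
proof (induction N)
  case 0
  then show ?case by simp
next
  case (Suc N)
  show ?case
  proof (cases "m \<le> N")
    case False
    then have "m = Suc N" using Suc.prems by simp
    then show ?thesis by simp
  next
    case True
    let ?A = "{m+1..N}" and ?x = "Suc N"
    have ins: "{m+1..Suc N} = insert ?x ?A" using True by auto
    have nx: "?x \<notin> ?A" by simp
    have mx: "max ?x b = ?x" "max b ?x = ?x" if "b \<in> ?A" for b using that by auto
    let ?F = "\<lambda>a b. (if a = b then 2 else 1) * e (max a b)"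
    have "(\<Sum>a\<in>insert ?x ?A. \<Sum>b\<in>insert ?x ?A. ?F a b)
        = ?F ?x ?x + (\<Sum>b\<in>?A. ?F ?x b) + (\<Sum>a\<in>?A. ?F a ?x) + (\<Sum>a\<in>?A. \<Sum>b\<in>?A. ?F a b)"
      using nx by (simp add: sum.distrib algebra_simps)
    also have "(\<Sum>b\<in>?A. ?F ?x b) = real (N - m) * e ?x"
      using mx by (simp add: sum.cong[OF refl, of ?A "\<lambda>b. ?F ?x b" "\<lambda>b. e ?x"])
    also have "(\<Sum>a\<in>?A. ?F a ?x) = real (N - m) * e ?x"
      using mx by (simp add: sum.cong[OF refl, of ?A "\<lambda>a. ?F a ?x" "\<lambda>a. e ?x"])
    also have "(\<Sum>a\<in>?A. \<Sum>b\<in>?A. ?F a b) = (\<Sum>a\<in>?A. 2 * (real a - real m) * e a)"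
      by (rule Suc.IH[OF True])
    finally have "(\<Sum>a\<in>insert ?x ?A. \<Sum>b\<in>insert ?x ?A. ?F a b) = (\<Sum>a\<in>insert ?x ?A. 2 * (real a - real m) * e a)"
      using nx True by (simp add: of_nat_diff algebra_simps)
    then show ?thesis unfolding ins .
  qed
qed

lemma algA: "(x::real) \<ge> 0 \<Longrightarrow> (x + 1 - m) * (x + 1 - 2) / (x + 1) + ((x * (x + 1) - m * (m + 1)) / 2 - (m + 2) * (x - m) + 2 * m * (h - H))
   = ((x + 1) * (x + 1 + 1) - m * (m + 1)) / 2 - (m + 2) * (x + 1 - m) + 2 * m * (h + 1 / (x + 1) - H)"
proof -
  assume "x \<ge> 0"
  then have "x + 1 \<noteq> 0" by simp
  then show ?thesis by (simp add: divide_simps) (simp add: algebra_simps)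
qed

lemma algB: "(x::real) \<ge> 1 \<Longrightarrow> (x + 1 - m) / ((x + 1) * (x + 1 - 1)) + (h - H - 1 + m / x)
   = (h + 1 / x) - H - 1 + m / (x + 1)"
proof -
  assume "x \<ge> 1"
  then have "x + 1 \<noteq> 0" "x \<noteq> 0" by auto
  then show ?thesis by (simp add: divide_simps) (simp add: algebra_simps)
qed

lemma sumA:
  "m \<le> N \<Longrightarrow> 1 \<le> m \<Longrightarrow> (\<Sum>a\<in>{m+1..N}. (real a - real m) * (real a - 2) / real a)
    = (real N * (real N + 1) - real m * (real m + 1)) / 2 - (real m + 2) * (real N - real m) + 2 * real m * (harm N - harm m)"
proof (induction N)
  case 0
  then show ?case by simp
next
  case (Suc N)
  show ?case
  proof (cases "m \<le> N")
    case False
    then have "m = Suc N" using Suc.prems by simp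
    then show ?thesis by simp
  next
    case True
    have ins: "{m+1..Suc N} = insert (Suc N) {m+1..N}" using True by auto
    have "(\<Sum>a\<in>insert (Suc N) {m+1..N}. (real a - real m) * (real a - 2) / real a)
      = (real (Suc N) - real m) * (real (Suc N) - 2) / real (Suc N) + (\<Sum>a\<in>{m+1..N}. (real a - real m) * (real a - 2) / real a)"
      by (simp add: add_ac)
    also have "\<dots> = (real N + 1 - real m) * (real N + 1 - 2) / (real N + 1) + ((real N * (real N + 1) - real m * (real m + 1)) / 2 - (real m + 2) * (real N - real m) + 2 * real m * (harm N - harm m))"
      using Suc.IH[OF True Suc.prems(2)] by (simp add: add_ac)
    also have "\<dots> = ((real N + 1) * (real N + 1 + 1) - real m * (real m + 1)) / 2 - (real m + 2) * (real N + 1 - real m) + 2 * real m * ((harm N + 1 / (real N + 1)) - harm m)"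
      by (rule algA) simp
    also have "\<dots> = (real (Suc N) * (real (Suc N) + 1) - real m * (real m + 1)) / 2 - (real m + 2) * (real (Suc N) - real m) + 2 * real m * (harm (Suc N) - harm m)"
      by (simp add: harm_Suc inverse_eq_divide add_ac)
    finally show ?thesis unfolding ins .
  qed
qed

lemma sumB:
  "m \<le> N \<Longrightarrow> 1 \<le> m \<Longrightarrow> (\<Sum>a\<in>{m+1..N}. (real a - real m) / (real a * (real a - 1)))
    = harm (N - 1) - harm (m - 1) - 1 + real m / real N"
proof (induction N)
  case 0
  then show ?case by simp
next
  case (Suc N)
  show ?case
  proof (cases "m \<le> N")
    case False
    then have "m = Suc N" using Suc.prems by simp
    then show ?thesis by simp
  next
    case True
    have ins: "{m+1..Suc N} = insert (Suc N) {m+1..N}" using True by auto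
    have N: "N \<ge> 1" using True Suc.prems by simp
    then have h: "harm (Suc N - 1) = harm (N - 1) + 1 / real N"
      by (cases N) (simp_all add: harm_Suc field_simps)
    have "(\<Sum>a\<in>insert (Suc N) {m+1..N}. (real a - real m) / (real a * (real a - 1)))
      = (real N + 1 - real m) / ((real N + 1) * (real N + 1 - 1)) + (\<Sum>a\<in>{m+1..N}. (real a - real m) / (real a * (real a - 1)))"
      by (simp add: add_ac)
    also have "\<dots> = (real N + 1 - real m) / ((real N + 1) * (real N + 1 - 1)) + (harm (N - 1) - harm (m - 1) - 1 + real m / real N)"
      using Suc.IH[OF True Suc.prems(2)] by simp
    also have "\<dots> = (harm (N - 1) + 1 / real N) - harm (m - 1) - 1 + real m / (real N + 1)"
      by (rule algB) (use N in simp)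
    also have "\<dots> = harm (Suc N - 1) - harm (m - 1) - 1 + real m / real (Suc N)"
      using h by (simp add: add_ac)
    finally show ?thesis unfolding ins .
  qed
qed

lemma algFinal:
  assumes x: "(x::real) \<ge> 3" and y: "y \<ge> 1"
  shows "8 / ((x-1)*(x-2)) * ((x*(x+1) - y*(y+1))/2 - (y+2)*(x-y) + 2*y*((H1 + 1/x) - (H0 + 1/y)))
     + 8/(x-1) * (H1 - H0 - 1 + y/x) - (2*(x-y)/(x-1))^2
   = 8*(H1-H0)*(x+2*y-2)/((x-1)*(x-2)) - 4*(x-y)*(4*x+y-5)/((x-1)^2*(x-2))"
proof -
  have "x \<noteq> 0" "x - 1 \<noteq> 0" "x - 2 \<noteq> 0" "y \<noteq> 0" using x y by auto
  then show ?thesis by (simp add: divide_simps power2_eq_square) (simp add: algebra_simps)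
qed

context
  fixes n :: nat
  assumes n: "n \<ge> 3"
begin

lemma probM1: "prob_space (PiM {2..n} (\<lambda>_. Exp1))"
  by (intro prob_space_PiM prob_Exp1)

lemma prob_coal: "prob_space (coalescent n)"
  unfolding coalescent_eq by (intro prob_space_pair probM1) (rule prob_space_measure_pmf)

lemma finpn: "finite (set_pmf (pn n))" using pn_finite n by simp

lemma term1:
  assumes j: "j \<in> {2..n}"
  shows "integrable (coalescent n) (\<lambda>\<omega>. fst \<omega> j * cc n (snd \<omega>) j)"
    "integral\<^sup>L (coalescent n) (\<lambda>\<omega>. fst \<omega> j * cc n (snd \<omega>) j) = 2 / (real n - 1)"
proof -
  note W = W_mom1[OF finite_atLeastAtMost j]
  show "integrable (coalescent n) (\<lambda>\<omega>. fst \<omega> j * cc n (snd \<omega>) j)"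
    unfolding coalescent_eq using pair_prod(1)[OF probM1 finpn W(1), of "\<lambda>Ps. cc n Ps j"] by simp
  show "integral\<^sup>L (coalescent n) (\<lambda>\<omega>. fst \<omega> j * cc n (snd \<omega>) j) = 2 / (real n - 1)"
    unfolding coalescent_eq using pair_prod(2)[OF probM1 finpn W(1), of "\<lambda>Ps. cc n Ps j"] W(2) Ecc[OF n j] by simp
qed

lemma term2:
  assumes j: "j \<in> {2..n}" and l: "l \<in> {2..n}"
  shows "integrable (coalescent n) (\<lambda>\<omega>. (fst \<omega> j * fst \<omega> l) * (cc n (snd \<omega>) j * cc n (snd \<omega>) l))"
    "integral\<^sup>L (coalescent n) (\<lambda>\<omega>. (fst \<omega> j * fst \<omega> l) * (cc n (snd \<omega>) j * cc n (snd \<omega>) l)) = (if j = l then 2 else 1) * e2 n (max j l)"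
proof -
  note W = W_mom[OF finite_atLeastAtMost j l]
  show "integrable (coalescent n) (\<lambda>\<omega>. (fst \<omega> j * fst \<omega> l) * (cc n (snd \<omega>) j * cc n (snd \<omega>) l))"
    unfolding coalescent_eq using pair_prod(1)[OF probM1 finpn W(1), of "\<lambda>Ps. cc n Ps j * cc n Ps l"] by simp
  show "integral\<^sup>L (coalescent n) (\<lambda>\<omega>. (fst \<omega> j * fst \<omega> l) * (cc n (snd \<omega>) j * cc n (snd \<omega>) l)) = (if j = l then 2 else 1) * e2 n (max j l)"
    unfolding coalescent_eq using pair_prod(2)[OF probM1 finpn W(1), of "\<lambda>Ps. cc n Ps j * cc n Ps l"] W(2) Ecc2[OF n j l] by simp
qed

lemma EY:
  assumes m: "1 \<le> m" "m \<le> n"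
  shows "integrable (coalescent n) (Yf n m)" "integral\<^sup>L (coalescent n) (Yf n m) = 2 * (real n - real m) / (real n - 1)"
proof -
  have Y: "Yf n m = (\<lambda>\<omega>. \<Sum>j\<in>{m+1..n}. fst \<omega> j * cc n (snd \<omega>) j)" by (simp add: Yf_def fun_eq_iff)
  have jj: "j \<in> {m+1..n} \<Longrightarrow> j \<in> {2..n}" for j using m by auto
  show "integrable (coalescent n) (Yf n m)" unfolding Y
    by (intro Bochner_Integration.integrable_sum term1(1) jj)
  have "integral\<^sup>L (coalescent n) (Yf n m) = (\<Sum>j\<in>{m+1..n}. integral\<^sup>L (coalescent n) (\<lambda>\<omega>. fst \<omega> j * cc n (snd \<omega>) j))"
    unfolding Y by (intro Bochner_Integration.integral_sum term1(1) jj)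
  also have "\<dots> = (\<Sum>j\<in>{m+1..n}. 2 / (real n - 1))" by (intro sum.cong refl term1(2) jj)
  finally show "integral\<^sup>L (coalescent n) (Yf n m) = 2 * (real n - real m) / (real n - 1)" using m by (simp add: of_nat_diff)
qed

lemma EY2:
  assumes m: "1 \<le> m" "m \<le> n"
  shows "integrable (coalescent n) (\<lambda>\<omega>. (Yf n m \<omega>)^2)"
    "integral\<^sup>L (coalescent n) (\<lambda>\<omega>. (Yf n m \<omega>)^2) = (\<Sum>a\<in>{m+1..n}. 2 * (real a - real m) * e2 n a)"
proof -
  have Y: "(\<lambda>\<omega>. (Yf n m \<omega>)^2) = (\<lambda>\<omega>. \<Sum>j\<in>{m+1..n}. \<Sum>l\<in>{m+1..n}. (fst \<omega> j * fst \<omega> l) * (cc n (snd \<omega>) j * cc n (snd \<omega>) l))"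
    by (simp add: Yf_def fun_eq_iff power2_eq_square sum_product algebra_simps)
  have jj: "j \<in> {m+1..n} \<Longrightarrow> j \<in> {2..n}" for j using m by auto
  show "integrable (coalescent n) (\<lambda>\<omega>. (Yf n m \<omega>)^2)" unfolding Y
    by (intro Bochner_Integration.integrable_sum term2(1) jj)
  have "integral\<^sup>L (coalescent n) (\<lambda>\<omega>. (Yf n m \<omega>)^2) = (\<Sum>j\<in>{m+1..n}. \<Sum>l\<in>{m+1..n}. integral\<^sup>L (coalescent n) (\<lambda>\<omega>. (fst \<omega> j * fst \<omega> l) * (cc n (snd \<omega>) j * cc n (snd \<omega>) l)))"
    unfolding Y
    apply (subst Bochner_Integration.integral_sum)
     apply (intro Bochner_Integration.integrable_sum term2(1) jj; assumption)
    apply (intro sum.cong refl)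
    apply (rule Bochner_Integration.integral_sum)
    apply (intro term2(1) jj; assumption)
    done
  also have "\<dots> = (\<Sum>j\<in>{m+1..n}. \<Sum>l\<in>{m+1..n}. (if j = l then 2 else 1) * e2 n (max j l))"
    by (intro sum.cong refl term2(2) jj)
  also have "\<dots> = (\<Sum>a\<in>{m+1..n}. 2 * (real a - real m) * e2 n a)"
    by (rule dsum) (use m in simp)
  finally show "integral\<^sup>L (coalescent n) (\<lambda>\<omega>. (Yf n m \<omega>)^2) = (\<Sum>a\<in>{m+1..n}. 2 * (real a - real m) * e2 n a)" .
qed

lemma VarY:
  assumes m: "1 \<le> m" "m \<le> n"
  shows "integral\<^sup>L (coalescent n) (\<lambda>\<omega>. (Yf n m \<omega> - 2 * (real n - real m) / (real n - 1))^2)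
    = 8 * (harm (n - 1) - harm (m - 1)) * (real n + 2 * real m - 2) / ((real n - 1) * (real n - 2))
          - 4 * (real n - real m) * (4 * real n + real m - 5) / ((real n - 1)\<^sup>2 * (real n - 2))"
proof -
  interpret prob_space "coalescent n" by (rule prob_coal)
  let ?c = "2 * (real n - real m) / (real n - 1)"
  have eq: "(\<lambda>\<omega>. (Yf n m \<omega> - ?c)^2) = (\<lambda>\<omega>. (Yf n m \<omega>)^2 - 2 * ?c * Yf n m \<omega> + ?c^2)"
    by (simp add: fun_eq_iff power2_eq_square algebra_simps)
  have "integral\<^sup>L (coalescent n) (\<lambda>\<omega>. (Yf n m \<omega> - ?c)^2)
     = integral\<^sup>L (coalescent n) (\<lambda>\<omega>. (Yf n m \<omega>)^2) - 2 * ?c * integral\<^sup>L (coalescent n) (Yf n m) + ?c^2"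
    unfolding eq using EY[OF m] EY2[OF m] by (simp add: prob_space)
  also have "\<dots> = (\<Sum>a\<in>{m+1..n}. 2 * (real a - real m) * e2 n a) - ?c^2"
    using EY[OF m] EY2[OF m] by (simp add: power2_eq_square)
  also have "(\<Sum>a\<in>{m+1..n}. 2 * (real a - real m) * e2 n a)
      = 8 / ((real n - 1) * (real n - 2)) * (\<Sum>a\<in>{m+1..n}. (real a - real m) * (real a - 2) / real a)
       + 8 / (real n - 1) * (\<Sum>a\<in>{m+1..n}. (real a - real m) / (real a * (real a - 1)))"
  proof -
    have "(\<Sum>a\<in>{m+1..n}. 2 * (real a - real m) * e2 n a) = (\<Sum>a\<in>{m+1..n}.
        8 / ((real n - 1) * (real n - 2)) * ((real a - real m) * (real a - 2) / real a)
       + 8 / (real n - 1) * ((real a - real m) / (real a * (real a - 1))))"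
    proof (intro sum.cong refl)
      fix a assume a: "a \<in> {m+1..n}"
      then have a2: "a \<in> {2..n}" using m by auto
      show "2 * (real a - real m) * e2 n a = 8 / ((real n - 1) * (real n - 2)) * ((real a - real m) * (real a - 2) / real a)
       + 8 / (real n - 1) * ((real a - real m) / (real a * (real a - 1)))"
        unfolding e2_eq[OF n a2] by (simp add: field_simps)
    qed
    then show ?thesis by (simp add: sum.distrib sum_distrib_left)
  qed
  also have "(\<Sum>a\<in>{m+1..n}. (real a - real m) * (real a - 2) / real a) = 
     (real n * (real n + 1) - real m * (real m + 1)) / 2 - (real m + 2) * (real n - real m) + 2 * real m * (harm n - harm m)"
    by (rule sumA) (use m in auto)
  also have "(\<Sum>a\<in>{m+1..n}. (real a - real m) / (real a * (real a - 1))) = harm (n - 1) - harm (m - 1) - 1 + real m / real n"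
    by (rule sumB) (use m in auto)
  also have "harm n = harm (n - 1) + 1 / real n" using n by (cases n) (simp_all add: harm_Suc inverse_eq_divide)
  also have "harm m = harm (m - 1) + 1 / real m" using m by (cases m) (simp_all add: harm_Suc inverse_eq_divide)
  finally show ?thesis using algFinal[of "real n" "real m" "harm (n - 1)" "harm (m - 1)"] n m by simp
qed

end


lemma two_div: "(x::real) \<ge> 3 \<Longrightarrow> 2 * (x - real 1) / (x - 1) = 2"
proof -
  assume "x \<ge> 3"
  then have "x - 1 \<noteq> 0" by simp
  then show ?thesis by (simp only: of_nat_1) (rule nonzero_mult_div_cancel_right)
qed

lemma alg0: "(x::real) \<ge> 3 \<Longrightarrow> 8 * (H - 0) * (x + 2 * 1 - 2) / ((x - 1) * (x - 2)) - 4 * (x - 1) * (4 * x + 1 - 5) / ((x - 1)\<^sup>2 * (x - 2))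
  = (8 * x * (H + 1 / x) - 16 * x + 8) / ((x - 1) * (x - 2))"
proof -
  assume x: "x \<ge> 3"
  have "x \<noteq> 0" "x - 1 \<noteq> 0" "x - 2 \<noteq> 0" using x by auto
  then show ?thesis by (simp add: divide_simps power2_eq_square) (simp add: algebra_simps)
qed

theorem proposition5:
  fixes n :: nat and \<alpha> :: real
  assumes "n \<ge> 3" and "0 \<le> \<alpha>" and "\<alpha> \<le> 1"
  defines "m \<equiv> nat \<lfloor>real n powr \<alpha>\<rfloor>"
  defines "EL \<equiv> integral\<^sup>L (coalescent n) (ext_length_part n \<alpha> 1)"
  defines "EL0 \<equiv> integral\<^sup>L (coalescent n) (ext_length n)"
  shows "EL = 2 * (real n - real m) / (real n - 1)
    \<and> integral\<^sup>L (coalescent n) (\<lambda>\<omega>. (ext_length_part n \<alpha> 1 \<omega> - EL)\<^sup>2)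
        = 8 * (harm (n - 1) - harm (m - 1)) * (real n + 2 * real m - 2) / ((real n - 1) * (real n - 2))
          - 4 * (real n - real m) * (4 * real n + real m - 5) / ((real n - 1)\<^sup>2 * (real n - 2))
    \<and> EL0 = 2
    \<and> integral\<^sup>L (coalescent n) (\<lambda>\<omega>. (ext_length n \<omega> - EL0)\<^sup>2)
        = (8 * real n * harm n - 16 * real n + 8) / ((real n - 1) * (real n - 2))"
proof -
  note n = assms(1) and a = assms(2,3)
  have m: "1 \<le> m" "m \<le> n" using m_bounds[OF _ a, of n] n by (auto simp: m_def)
  have ae1: "AE \<omega> in coalescent n. ext_length_part n \<alpha> 1 \<omega> = Yf n m \<omega>"
    using AE_ext(1)[OF n a] by (simp add: m_def)
  have ae0: "AE \<omega> in coalescent n. ext_length n \<omega> = Yf n 1 \<omega>"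
    using AE_ext(2)[OF n a] .
  have meas: "ext_length_part n \<alpha> 1 \<in> borel_measurable (coalescent n)"
    "ext_length n \<in> borel_measurable (coalescent n)"
    "Yf n k \<in> borel_measurable (coalescent n)" for k
    unfolding coalescent_eq by measurable
  have EL: "EL = 2 * (real n - real m) / (real n - 1)"
  proof -
    have "EL = integral\<^sup>L (coalescent n) (Yf n m)"
      unfolding EL_def by (rule integral_cong_AE[OF meas(1) meas(3) ae1])
    then show ?thesis using EY(2)[OF n m] by simp
  qed
  have V: "integral\<^sup>L (coalescent n) (\<lambda>\<omega>. (ext_length_part n \<alpha> 1 \<omega> - EL)\<^sup>2)
        = 8 * (harm (n - 1) - harm (m - 1)) * (real n + 2 * real m - 2) / ((real n - 1) * (real n - 2))
          - 4 * (real n - real m) * (4 * real n + real m - 5) / ((real n - 1)\<^sup>2 * (real n - 2))"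
  proof -
    have "integral\<^sup>L (coalescent n) (\<lambda>\<omega>. (ext_length_part n \<alpha> 1 \<omega> - EL)\<^sup>2)
        = integral\<^sup>L (coalescent n) (\<lambda>\<omega>. (Yf n m \<omega> - 2 * (real n - real m) / (real n - 1))\<^sup>2)"
      unfolding EL
      by (rule integral_cong_AE) (use meas ae1 in \<open>auto elim!: eventually_mono\<close>)
    then show ?thesis using VarY[OF n m] by simp
  qed
  have EL0: "EL0 = 2"
  proof -
    have "EL0 = integral\<^sup>L (coalescent n) (Yf n 1)"
      unfolding EL0_def by (rule integral_cong_AE[OF meas(2) meas(3) ae0])
    moreover have "2 * (real n - real 1) / (real n - 1) = 2" using n by (intro two_div) simp
    ultimately show ?thesis using EY(2)[OF n, of 1] n by simp
  qed
  have V0: "integral\<^sup>L (coalescent n) (\<lambda>\<omega>. (ext_length n \<omega> - EL0)\<^sup>2)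
        = (8 * real n * harm n - 16 * real n + 8) / ((real n - 1) * (real n - 2))"
  proof -
    have "integral\<^sup>L (coalescent n) (\<lambda>\<omega>. (ext_length n \<omega> - EL0)\<^sup>2)
        = integral\<^sup>L (coalescent n) (\<lambda>\<omega>. (Yf n 1 \<omega> - 2 * (real n - real 1) / (real n - 1))\<^sup>2)"
    proof -
      have "2 * (real n - real 1) / (real n - 1) = 2" using n by (intro two_div) simp
      then show ?thesis unfolding EL0
        by (simp only:) (rule integral_cong_AE, use meas ae0 in \<open>auto elim!: eventually_mono\<close>)
    qed
    also have "\<dots> = 8 * (harm (n - 1) - harm (1 - 1)) * (real n + 2 * real 1 - 2) / ((real n - 1) * (real n - 2))
          - 4 * (real n - real 1) * (4 * real n + real 1 - 5) / ((real n - 1)\<^sup>2 * (real n - 2))"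
      by (rule VarY[OF n]) (use n in auto)
    also have "harm n = harm (n - 1) + 1 / real n" using n by (cases n) (simp_all add: harm_Suc inverse_eq_divide)
    then have "8 * (harm (n - 1) - harm (1 - 1)) * (real n + 2 * real 1 - 2) / ((real n - 1) * (real n - 2))
          - 4 * (real n - real 1) * (4 * real n + real 1 - 5) / ((real n - 1)\<^sup>2 * (real n - 2))
       = (8 * real n * harm n - 16 * real n + 8) / ((real n - 1) * (real n - 2))"
      using alg0[of "real n" "harm (n - 1)"] n by (simp add: harm_def)
    finally show ?thesis .
  qed
  show ?thesis using EL V EL0 V0 by blast
qed


end
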